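(* Let $(X_{s,t})$ be the INMA$(q_1,q_2)$ random field defined in the context with Poisson innovations $\varepsilon_{s,t}\sim\mathrm{Poi}(\mu_\varepsilon)$, $\mu_\varepsilon>0$, and let $\mu_X=\mu_\varepsilon\beta_\bullet$. Let $0\le k\le q_1$, $0\le l\le q_2$. Then: (i) the autocorrelation $\rho(k,l):=\operatorname{Corr}(X_{s,t},X_{s+k,t+l})$ equals $$\rho(k,l)=\frac{1}{\beta_\bullet}\sum_{i=k}^{q_1}\sum_{j=l}^{q_2}p_{(i,j),(i-k,j-l)};$$ (ii) for all $u_1,u_2\in[-1,1]$, $$\mathbb{E}\big(u_1^{X_{s,t}}u_2^{X_{s-k,t-l}}\big)=\exp\big(\mu_X(u_1+u_2-2)\big)\exp\big(\mu_X\,\rho(k,l)\,(u_1-1)(u_2-1)\big),$$ i.e. $(X_{s,t},X_{s-k,t-l})$ has a bivariate Poisson distribution: it has the law of $(A+C,B+C)$ with $A,B,C$ independent, $A,B\sim\mathrm{Poi}(\mu_X(1-\rho(k,l)))$ and $C\sim\mathrm{Poi}(\mu_X\rho(k,l))$.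
   Context: INMA$(q_1,q_2)$ random field: Fix $q_1,q_2\in\mathbb{N}_0$ with $q_1+q_2\ge 1$ and parameters $\beta_{ij}\in[0,1]$ for $0\le i\le q_1$, $0\le j\le q_2$, not all zero; put $\beta_\bullet=\sum_{i=0}^{q_1}\sum_{j=0}^{q_2}\beta_{ij}$. Let $(\varepsilon_{s,t})_{s,t\in\mathbb{Z}}$ be i.i.d. random variables with values in $\mathbb{N}_0$. Let $\mathbf{Z}_{s,t;r}=(Z^{(i,j)}_{s,t;r})_{0\le i\le q_1,0\le j\le q_2}$, $s,t\in\mathbb{Z}$, $r\in\mathbb{N}$, be i.i.d. random vectors (distributed as a generic vector $\mathbf{Z}=(Z^{(i,j)})$), independent of $(\varepsilon_{s,t})$, whose components are Bernoulli with $\mathbb{P}(Z^{(i,j)}=1)=\beta_{ij}$; the components within one vector may be arbitrarily dependent. Write $p_{(i,j),(i',j')}:=\mathbb{P}(Z^{(i,j)}=1,\,Z^{(i',j')}=1)$. The field is $X_{s,t}=\sum_{i=0}^{q_1}\sum_{j=0}^{q_2}\sum_{r=1}^{\varepsilon_{s-i,t-j}}Z^{(i,j)}_{s-i,t-j;r}$. *)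

theory Defs
  imports "HOL-Probability.Probability"
begin

(* Poisson law with rate r >= 0; rate 0 is the point mass at 0
   (HOL's poisson_pmf is only specified for positive rates). *)
definition poi :: "real \<Rightarrow> nat pmf" where
  "poi r = (if r = 0 then return_pmf 0 else poisson_pmf r)"

definition corr :: "'a measure \<Rightarrow> ('a \<Rightarrow> real) \<Rightarrow> ('a \<Rightarrow> real) \<Rightarrow> real" where
  "corr M U V =
     (\<integral>\<omega>. (U \<omega> - (\<integral>x. U x \<partial>M)) * (V \<omega> - (\<integral>x. V x \<partial>M)) \<partial>M)
     / sqrt ((\<integral>\<omega>. (U \<omega> - (\<integral>x. U x \<partial>M))\<^sup>2 \<partial>M) * (\<integral>\<omega>. (V \<omega> - (\<integral>x. V x \<partial>M))\<^sup>2 \<partial>M))"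

(* The random vector Z_{s,t;r} is encoded by the set of indices (i,j) with Z^{(i,j)}_{s,t;r} = 1 *)
definition Zcomp :: "(int \<times> int \<times> nat \<Rightarrow> 'a \<Rightarrow> (nat \<times> nat) set) \<Rightarrow> int \<Rightarrow> int \<Rightarrow> nat \<Rightarrow> nat \<Rightarrow> nat \<Rightarrow> 'a \<Rightarrow> nat" where
  "Zcomp Z s t r i j \<omega> = (if (i, j) \<in> Z (s, t, r) \<omega> then 1 else 0)"

definition inma_field :: "nat \<Rightarrow> nat \<Rightarrow> (int \<times> int \<Rightarrow> 'a \<Rightarrow> nat)
    \<Rightarrow> (int \<times> int \<times> nat \<Rightarrow> 'a \<Rightarrow> (nat \<times> nat) set) \<Rightarrow> int \<Rightarrow> int \<Rightarrow> 'a \<Rightarrow> nat" where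
  "inma_field q1 q2 eps Z s t \<omega> =
     (\<Sum>i\<in>{0..q1}. \<Sum>j\<in>{0..q2}. \<Sum>r\<in>{1..eps (s - int i, t - int j) \<omega>}.
        Zcomp Z (s - int i) (t - int j) r i j \<omega>)"

(* joint family of all innovations and all thinning vectors, used to express
   mutual independence of (eps_{s,t}) and (Z_{s,t;r}) *)
definition inma_family :: "(int \<times> int \<Rightarrow> 'a \<Rightarrow> nat)
    \<Rightarrow> (int \<times> int \<times> nat \<Rightarrow> 'a \<Rightarrow> (nat \<times> nat) set)
    \<Rightarrow> (int \<times> int) + (int \<times> int \<times> nat) \<Rightarrow> 'a \<Rightarrow> nat + (nat \<times> nat) set" where
  "inma_family eps Z x \<omega> = (case x of Inl st \<Rightarrow> Inl (eps st \<omega>) | Inr str \<Rightarrow> Inr (Z str \<omega>))"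

definition pZ :: "(nat \<times> nat) set pmf \<Rightarrow> nat \<times> nat \<Rightarrow> nat \<times> nat \<Rightarrow> real" where
  "pZ PZ a b = measure_pmf.prob PZ {A. a \<in> A \<and> b \<in> A}"

end

theory Submission
  imports Defs
begin

lemma (in prob_space) sums_if_integral:
  fixes N :: "'a \<Rightarrow> nat" and h :: "'a \<Rightarrow> real"
  assumes N: "N \<in> measurable M (count_space UNIV)" and h: "h \<in> borel_measurable M"
    and B: "\<And>\<omega>. \<omega> \<in> space M \<Longrightarrow> \<bar>h \<omega>\<bar> \<le> B"
  shows "(\<lambda>n. \<integral>\<omega>. (if N \<omega> = n then h \<omega> else 0) \<partial>M) sums (\<integral>\<omega>. h \<omega> \<partial>M)"
proof -
  have mN: "{\<omega> \<in> space M. N \<omega> = n} \<in> sets M" for n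
    using N by (auto intro!: measurable_sets_Collect)
  have mf: "(\<lambda>\<omega>. if N \<omega> = n then h \<omega> else 0) \<in> borel_measurable M" for n
    using N h by measurable
  have B0: "0 \<le> B"
  proof -
    obtain \<omega> where "\<omega> \<in> space M" using not_empty by blast
    then show ?thesis using B[of \<omega>] by linarith
  qed
  have intf: "integrable M (\<lambda>\<omega>. if N \<omega> = n then h \<omega> else 0)" for n
    by (rule integrable_const_bound[where B=B]) (use B B0 mf in auto)
  have sumP: "summable (\<lambda>n. prob {\<omega> \<in> space M. N \<omega> = n})"
  proof -
    have "(\<lambda>n. prob {\<omega> \<in> space M. N \<omega> = n}) sums prob (\<Union>n. {\<omega> \<in> space M. N \<omega> = n})"
      by (rule finite_measure_UNION) (use mN in \<open>auto simp: disjoint_family_on_def\<close>)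
    then show ?thesis by (simp add: sums_iff)
  qed
  have le: "norm (\<integral>\<omega>. norm (if N \<omega> = n then h \<omega> else 0) \<partial>M) \<le> B * prob {\<omega> \<in> space M. N \<omega> = n}" for n
  proof -
    have "(\<integral>\<omega>. norm (if N \<omega> = n then h \<omega> else 0) \<partial>M) \<le> (\<integral>\<omega>. B * indicator {\<omega> \<in> space M. N \<omega> = n} \<omega> \<partial>M)"
    proof (rule integral_mono)
      show "integrable M (\<lambda>\<omega>. B * indicator {\<omega> \<in> space M. N \<omega> = n} \<omega>)"
        using mN by (intro integrable_mult_right integrable_real_indicator) (use mN in \<open>simp_all add: less_top[symmetric]\<close>)
    qed (use intf mN B in \<open>auto simp: indicator_def\<close>)
    also have "\<dots> = B * prob {\<omega> \<in> space M. N \<omega> = n}" using mN by simp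
    finally show ?thesis by simp
  qed
  have eq: "(\<lambda>\<omega>. \<Sum>n. if N \<omega> = n then h \<omega> else 0) = h"
  proof
    fix \<omega>
    have "(\<lambda>n. if n = N \<omega> then h \<omega> else 0) sums h \<omega>" by (rule sums_single)
    moreover have "(\<lambda>n. if N \<omega> = n then h \<omega> else 0) = (\<lambda>n. if n = N \<omega> then h \<omega> else 0)" by auto
    ultimately show "(\<Sum>n. if N \<omega> = n then h \<omega> else 0) = h \<omega>" by (simp add: sums_iff)
  qed
  have "(\<lambda>n. \<integral>\<omega>. (if N \<omega> = n then h \<omega> else 0) \<partial>M) sums (\<integral>\<omega>. (\<Sum>n. if N \<omega> = n then h \<omega> else 0) \<partial>M)"
  proof (rule sums_integral[OF intf])
    show "AE x in M. summable (\<lambda>i. norm (if N x = i then h x else 0))"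
    proof (rule AE_I2)
      fix x
      have "(\<lambda>i. if i = N x then norm (h x) else 0) sums norm (h x)" by (rule sums_single)
      moreover have "(\<lambda>i. norm (if N x = i then h x else 0)) = (\<lambda>i. if i = N x then norm (h x) else 0)" by auto
      ultimately show "summable (\<lambda>i. norm (if N x = i then h x else 0))" by (simp add: sums_iff)
    qed
    show "summable (\<lambda>i. \<integral>x. norm (if N x = i then h x else 0) \<partial>M)"
      by (rule summable_comparison_test[OF _ summable_mult[OF sumP, of B]]) (use le in auto)
  qed
  then show ?thesis unfolding eq .
qed

lemma pmf_poi: "0 \<le> r \<Longrightarrow> pmf (poi r) n = r ^ n / fact n * exp (- r)"
  by (cases "r = 0") (auto simp: poi_def pmf_return power_0_left)

lemma poi_sums: "0 \<le> r \<Longrightarrow> (\<lambda>n. pmf (poi r) n * x ^ n) sums exp (r * (x - 1))"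
proof -
  assume r: "0 \<le> r"
  have "(\<lambda>n. exp (- r) * ((r * x) ^ n /\<^sub>R fact n)) sums (exp (- r) * exp (r * x))"
    by (rule sums_mult[OF exp_converges])
  moreover have "exp (- r) * exp (r * x) = exp (r * (x - 1))"
    unfolding mult_exp_exp by (simp add: algebra_simps)
  moreover have "(\<lambda>n. exp (- r) * ((r * x) ^ n /\<^sub>R fact n)) = (\<lambda>n. pmf (poi r) n * x ^ n)"
    by (rule ext) (simp add: pmf_poi[OF r] power_mult_distrib divide_inverse mult_ac)
  ultimately show ?thesis by simp
qed

lemma pmf_nat_sums:
  fixes p :: "nat pmf" and f :: "nat \<Rightarrow> real"
  assumes "\<And>n. \<bar>f n\<bar> \<le> B"
  shows "(\<lambda>n. pmf p n * f n) sums (\<integral>x. f x \<partial>measure_pmf p)"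
proof -
  have "(\<lambda>n. \<integral>x. (if id x = n then f x else 0) \<partial>measure_pmf p) sums (\<integral>x. f x \<partial>measure_pmf p)"
    by (rule measure_pmf.sums_if_integral) (use assms in auto)
  moreover have "(\<integral>x. (if id x = n then f x else 0) \<partial>measure_pmf p) = pmf p n * f n" for n
  proof -
    have "(\<integral>x. (if id x = n then f x else 0) \<partial>measure_pmf p) = (\<integral>x. f n * indicator {n} x \<partial>measure_pmf p)"
      by (rule Bochner_Integration.integral_cong) (auto simp: indicator_def)
    also have "\<dots> = pmf p n * f n" by (simp add: measure_pmf_single)
    finally show ?thesis .
  qed
  ultimately show ?thesis by simp
qed

lemma meas_fam:
  assumes "prob_space M" and ind: "prob_space.indep_vars M (\<lambda>_. count_space UNIV) (inma_family eps Z) UNIV"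
  shows "eps st \<in> measurable M (count_space UNIV)" and "Z x \<in> measurable M (count_space UNIV)"
proof -
  interpret prob_space M by fact
  have rv: "inma_family eps Z i \<in> measurable M (count_space UNIV)" for i
    using ind by (auto simp: indep_vars_def)
  have "(\<lambda>\<omega>. projl (inma_family eps Z (Inl st) \<omega>)) \<in> measurable M (count_space UNIV)"
    by (rule measurable_compose[OF rv[of "Inl st"]]) simp
  then show "eps st \<in> measurable M (count_space UNIV)" by (simp add: inma_family_def)
  have "(\<lambda>\<omega>. projr (inma_family eps Z (Inr x) \<omega>)) \<in> measurable M (count_space UNIV)"
    by (rule measurable_compose[OF rv[of "Inr x"]]) simp
  then show "Z x \<in> measurable M (count_space UNIV)" by (simp add: inma_family_def)
qed

definition Fsel :: "nat \<Rightarrow> ((nat \<times> nat) set \<Rightarrow> real) \<Rightarrow> ('i + 'j) \<Rightarrow> (nat + (nat \<times> nat) set) \<Rightarrow> real" where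
  "Fsel n g j v = (case v of Inl m \<Rightarrow> (if m = n then 1 else 0) | Inr z \<Rightarrow> g z)"

lemma prod_J:
  fixes F :: "int \<times> int + int \<times> int \<times> nat \<Rightarrow> real"
  assumes "finite A"
  shows "(\<Prod>j\<in>insert (Inl c) (Inr ` (\<lambda>r. (fst c, snd c, r)) ` A). F j) = F (Inl c) * (\<Prod>r\<in>A. F (Inr (fst c, snd c, r)))"
proof -
  have "(\<Prod>j\<in>insert (Inl c) (Inr ` (\<lambda>r. (fst c, snd c, r)) ` A). F j) = F (Inl c) * prod F (Inr ` (\<lambda>r. (fst c, snd c, r)) ` A)"
    by (rule prod.insert) (use assms in auto)
  also have "prod F (Inr ` (\<lambda>r. (fst c, snd c, r)) ` A) = prod (F \<circ> Inr) ((\<lambda>r. (fst c, snd c, r)) ` A)"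
    by (rule prod.reindex) (auto simp: inj_on_def)
  also have "\<dots> = prod (F \<circ> Inr \<circ> (\<lambda>r. (fst c, snd c, r))) A"
    by (rule prod.reindex) (auto simp: inj_on_def)
  finally show ?thesis by (simp add: comp_def)
qed

lemma cell_pgf:
  fixes g :: "(nat \<times> nat) set \<Rightarrow> real"
  assumes "prob_space M"
    and ind: "prob_space.indep_vars M (\<lambda>_. count_space UNIV) (inma_family eps Z) UNIV"
    and \<mu>: "\<mu> > 0"
    and de: "distr M (count_space UNIV) (eps c) = measure_pmf (poisson_pmf \<mu>)"
    and dZ: "\<And>r. distr M (count_space UNIV) (Z (fst c, snd c, r)) = measure_pmf PZ"
    and g: "\<And>z. \<bar>g z\<bar> \<le> 1"
  shows "(\<integral>\<omega>. (\<Prod>r\<in>{1..eps c \<omega>}. g (Z (fst c, snd c, r) \<omega>)) \<partial>M) = exp (\<mu> * ((\<integral>z. g z \<partial>measure_pmf PZ) - 1))"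
proof -
  interpret prob_space M by fact
  note me = meas_fam[OF \<open>prob_space M\<close> ind]
  have rvY: "inma_family eps Z j \<in> measurable M (count_space UNIV)" for j
    using ind unfolding indep_vars_def by blast
  define \<phi> where "\<phi> = (\<integral>z. g z \<partial>measure_pmf PZ)"
  define h where "h \<omega> = (\<Prod>r\<in>{1..eps c \<omega>}. g (Z (fst c, snd c, r) \<omega>))" for \<omega>
  have hb: "\<bar>h \<omega>\<bar> \<le> 1" for \<omega>
    unfolding h_def abs_prod by (rule prod_le_1) (use g in auto)
  have mh: "h \<in> borel_measurable M"
  proof -
    have "(\<lambda>\<omega>. (\<lambda>n \<omega>. \<Prod>r\<in>{1..n}. g (Z (fst c, snd c, r) \<omega>)) (eps c \<omega>) \<omega>) \<in> borel_measurable M"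
    proof (rule measurable_compose_countable[OF _ me(1)])
      fix n :: nat
      show "(\<lambda>\<omega>. \<Prod>r\<in>{1..n}. g (Z (fst c, snd c, r) \<omega>)) \<in> borel_measurable M"
        by (intro borel_measurable_prod measurable_compose[OF me(2)]) simp
    qed
    then show ?thesis by (simp add: h_def[abs_def])
  qed
  have S1: "(\<lambda>n. \<integral>\<omega>. (if eps c \<omega> = n then h \<omega> else 0) \<partial>M) sums (\<integral>\<omega>. h \<omega> \<partial>M)"
    by (rule sums_if_integral[OF me(1) mh]) (use hb in auto)
  have termeq: "(\<integral>\<omega>. (if eps c \<omega> = n then h \<omega> else 0) \<partial>M) = pmf (poisson_pmf \<mu>) n * \<phi> ^ n" for n
  proof -
    define J where "J = insert (Inl c) (Inr ` (\<lambda>r. (fst c, snd c, r)) ` {1..n})"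
    define X where "X j \<omega> = Fsel n g j (inma_family eps Z j \<omega>)" for j \<omega>
    have fin: "finite J" by (simp add: J_def)
    have indX: "indep_vars (\<lambda>_. borel) X J"
      unfolding X_def
      by (rule indep_vars_compose2[OF indep_vars_subset[OF ind]]) auto
    have Fb: "\<bar>Fsel n g j v\<bar> \<le> 1" for j v
      using g by (auto simp: Fsel_def split: sum.split)
    have intX: "integrable M (X j)" for j
    proof (rule integrable_const_bound[where B=1])
      show "AE x in M. norm (X j x) \<le> 1" unfolding X_def real_norm_def by (rule AE_I2) (rule Fb)
      show "X j \<in> borel_measurable M"
        unfolding X_def by (rule measurable_compose[OF rvY]) simp
    qed
    have inj: "inj_on (Inr :: int \<times> int \<times> nat \<Rightarrow> int \<times> int + int \<times> int \<times> nat) ((\<lambda>r. (fst c, snd c, r)) ` {1..n})" 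
      by (auto simp: inj_on_def)
    have inj2: "inj_on (\<lambda>r::nat. (fst c, snd c, r)) {1..n}" by (auto simp: inj_on_def)
    have prodJ: "(\<Prod>j\<in>J. X j \<omega>) = (if eps c \<omega> = n then 1 else 0) * (\<Prod>r\<in>{1..n}. g (Z (fst c, snd c, r) \<omega>))" for \<omega>
      unfolding J_def prod_J[OF finite_atLeastAtMost] by (simp add: X_def Fsel_def inma_family_def)
    have XL: "(\<integral>\<omega>. X (Inl c) \<omega> \<partial>M) = pmf (poisson_pmf \<mu>) n"
    proof -
      have "(\<integral>\<omega>. X (Inl c) \<omega> \<partial>M) = (\<integral>\<omega>. indicator {n} (eps c \<omega>) \<partial>M)"
        by (rule Bochner_Integration.integral_cong) (auto simp: X_def Fsel_def inma_family_def)
      also have "\<dots> = (\<integral>x. indicator {n} x \<partial>distr M (count_space UNIV) (eps c))"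
        by (rule integral_distr[symmetric, OF me(1)]) simp
      also have "\<dots> = pmf (poisson_pmf \<mu>) n" by (simp add: de measure_pmf_single)
      finally show ?thesis .
    qed
    have XR: "(\<integral>\<omega>. X (Inr (fst c, snd c, r)) \<omega> \<partial>M) = \<phi>" for r
    proof -
      have "(\<integral>\<omega>. X (Inr (fst c, snd c, r)) \<omega> \<partial>M) = (\<integral>\<omega>. g (Z (fst c, snd c, r) \<omega>) \<partial>M)"
        by (rule Bochner_Integration.integral_cong) (auto simp: X_def Fsel_def inma_family_def)
      also have "\<dots> = (\<integral>x. g x \<partial>distr M (count_space UNIV) (Z (fst c, snd c, r)))"
        by (rule integral_distr[symmetric, OF me(2)]) simp
      also have "\<dots> = \<phi>" by (simp add: dZ \<phi>_def)
      finally show ?thesis .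
    qed
    have "(\<integral>\<omega>. (if eps c \<omega> = n then h \<omega> else 0) \<partial>M) = (\<integral>\<omega>. (\<Prod>j\<in>J. X j \<omega>) \<partial>M)"
      by (rule Bochner_Integration.integral_cong) (auto simp: prodJ h_def)
    also have "\<dots> = (\<Prod>j\<in>J. \<integral>\<omega>. X j \<omega> \<partial>M)"
      by (rule indep_vars_lebesgue_integral[OF fin indX intX])
    also have "\<dots> = (\<integral>\<omega>. X (Inl c) \<omega> \<partial>M) * (\<Prod>r\<in>{1..n}. \<integral>\<omega>. X (Inr (fst c, snd c, r)) \<omega> \<partial>M)"
      unfolding J_def prod_J[OF finite_atLeastAtMost] ..
    also have "\<dots> = pmf (poisson_pmf \<mu>) n * \<phi> ^ n" by (simp add: XL XR)
    finally show ?thesis by simp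
  qed
  have S2: "(\<lambda>n. pmf (poisson_pmf \<mu>) n * \<phi> ^ n) sums exp (\<mu> * (\<phi> - 1))"
    using poi_sums[of \<mu> \<phi>] \<mu> by (simp add: poi_def)
  from S1 have "(\<lambda>n. pmf (poisson_pmf \<mu>) n * \<phi> ^ n) sums (\<integral>\<omega>. h \<omega> \<partial>M)"
    unfolding termeq .
  with S2 have "(\<integral>\<omega>. h \<omega> \<partial>M) = exp (\<mu> * (\<phi> - 1))" by (rule sums_unique2[symmetric])
  then show ?thesis unfolding h_def \<phi>_def .
qed

lemma cells_indep:
  fixes G :: "int \<times> int \<Rightarrow> (nat \<times> nat) set \<Rightarrow> real"
  assumes "prob_space M"
    and ind: "prob_space.indep_vars M (\<lambda>_. count_space UNIV) (inma_family eps Z) UNIV"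
  shows "prob_space.indep_vars M (\<lambda>_. borel) (\<lambda>c \<omega>. \<Prod>r\<in>{1..eps c \<omega>}. G c (Z (fst c, snd c, r) \<omega>)) C"
proof -
  interpret prob_space M by fact
  define K where "K c = insert (Inl c) (Inr ` {x::int \<times> int \<times> nat. (fst x, fst (snd x)) = c})" for c :: "int \<times> int"
  define \<Phi> where "\<Phi> c x = (\<Prod>r\<in>{1..projl (x (Inl c))}. G c (projr (x (Inr (fst c, snd c, r)))))"
    for c and x :: "int \<times> int + int \<times> int \<times> nat \<Rightarrow> nat + (nat \<times> nat) set"
  have disj: "disjoint_family_on K C"
    by (auto simp: disjoint_family_on_def K_def)
  have r1: "indep_vars (\<lambda>c. Pi\<^sub>M (K c) (\<lambda>_. count_space UNIV)) (\<lambda>c \<omega>. restrict (\<lambda>i. inma_family eps Z i \<omega>) (K c)) C"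
    by (rule indep_vars_restrict[OF ind _ disj]) auto
  have m\<Phi>: "\<Phi> c \<in> borel_measurable (Pi\<^sub>M (K c) (\<lambda>_. count_space UNIV))" for c
  proof -
    have inl: "Inl c \<in> K c" by (simp add: K_def)
    have inr: "Inr (fst c, snd c, r) \<in> K c" for r by (simp add: K_def)
    have "(\<lambda>x. (\<lambda>n x. \<Prod>r\<in>{1..n}. G c (projr (x (Inr (fst c, snd c, r))))) (projl (x (Inl c))) x)
          \<in> borel_measurable (Pi\<^sub>M (K c) (\<lambda>_. count_space UNIV))"
    proof (rule measurable_compose_countable)
      fix n :: nat
      show "(\<lambda>x. \<Prod>r\<in>{1..n}. G c (projr (x (Inr (fst c, snd c, r))))) \<in> borel_measurable (Pi\<^sub>M (K c) (\<lambda>_. count_space UNIV))"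
      proof (intro borel_measurable_prod)
        fix r
        show "(\<lambda>x. G c (projr (x (Inr (fst c, snd c, r))))) \<in> borel_measurable (Pi\<^sub>M (K c) (\<lambda>_. count_space UNIV))"
          by (rule measurable_compose[OF measurable_component_singleton[OF inr]]) simp
      qed
      show "(\<lambda>x. projl (x (Inl c))) \<in> measurable (Pi\<^sub>M (K c) (\<lambda>_. count_space UNIV)) (count_space UNIV)"
        by (rule measurable_compose[OF measurable_component_singleton[OF inl]]) simp
    qed
    then show ?thesis by (simp add: \<Phi>_def[abs_def])
  qed
  have r2: "indep_vars (\<lambda>_. borel) (\<lambda>c \<omega>. \<Phi> c (restrict (\<lambda>i. inma_family eps Z i \<omega>) (K c))) C"
    by (rule indep_vars_compose2[OF r1 m\<Phi>])
  have eq: "\<Phi> c (restrict (\<lambda>i. inma_family eps Z i \<omega>) (K c)) = (\<Prod>r\<in>{1..eps c \<omega>}. G c (Z (fst c, snd c, r) \<omega>))" for c \<omega>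
    by (simp add: \<Phi>_def K_def inma_family_def)
  show ?thesis using r2 unfolding eq .
qed

definition Bx :: "nat \<Rightarrow> nat \<Rightarrow> int \<Rightarrow> int \<Rightarrow> (int \<times> int) set" where
  "Bx q1 q2 s t = (\<lambda>(i, j). (s - int i, t - int j)) ` ({0..q1} \<times> {0..q2})"

definition idx :: "int \<Rightarrow> int \<Rightarrow> int \<times> int \<Rightarrow> nat \<times> nat" where
  "idx s t c = (nat (s - fst c), nat (t - snd c))"

lemma inj_Bx: "inj_on (\<lambda>(i::nat, j::nat). (s - int i, t - int j)) A"
  by (auto simp: inj_on_def)

lemma finite_Bx: "finite (Bx q1 q2 s t)"
  by (simp add: Bx_def)

lemma sum_Bx: "(\<Sum>c\<in>Bx q1 q2 s t. f (idx s t c)) = (\<Sum>i\<in>{0..q1}. \<Sum>j\<in>{0..q2}. f (i, j))"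
  unfolding Bx_def
  by (subst sum.reindex[OF inj_Bx]) (simp add: idx_def sum.cartesian_product case_prod_beta)

lemma idx_in_Bx: "c \<in> Bx q1 q2 s t \<Longrightarrow> fst (idx s t c) \<le> q1 \<and> snd (idx s t c) \<le> q2"
  by (auto simp: Bx_def idx_def)

lemma X_cells:
  "inma_field q1 q2 eps Z s t \<omega> =
     (\<Sum>c\<in>Bx q1 q2 s t. \<Sum>r\<in>{1..eps c \<omega>}. (if idx s t c \<in> Z (fst c, snd c, r) \<omega> then 1 else 0))"
  unfolding Bx_def inma_field_def Zcomp_def
  by (subst sum.reindex[OF inj_Bx]) (simp add: idx_def sum.cartesian_product case_prod_beta)

lemma Bx_inter:
  assumes "k \<le> q1" "l \<le> q2"
  shows "Bx q1 q2 s t \<inter> Bx q1 q2 (s - int k) (t - int l) = (\<lambda>(i, j). (s - int i, t - int j)) ` ({k..q1} \<times> {l..q2})"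
proof (intro equalityI subsetI)
  fix c assume c: "c \<in> Bx q1 q2 s t \<inter> Bx q1 q2 (s - int k) (t - int l)"
  from c have c1: "c \<in> Bx q1 q2 s t" and c2: "c \<in> Bx q1 q2 (s - int k) (t - int l)" by auto
  from c1 obtain i j where ij: "i \<le> q1" "j \<le> q2" "c = (s - int i, t - int j)"
    unfolding Bx_def by auto
  from c2 obtain i' j' where ij': "i' \<le> q1" "j' \<le> q2" "c = (s - int k - int i', t - int l - int j')"
    unfolding Bx_def by auto
  from ij(3) ij'(3) have "int i = int k + int i'" "int j = int l + int j'" by auto
  then have "i = k + i'" "j = l + j'" by linarith+
  note eqs = this
  have "c = (\<lambda>(i, j). (s - int i, t - int j)) (i, j)" using ij by simp
  moreover have "(i, j) \<in> {k..q1} \<times> {l..q2}" using ij eqs by auto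
  ultimately show "c \<in> (\<lambda>(i, j). (s - int i, t - int j)) ` ({k..q1} \<times> {l..q2})"
    by (rule image_eqI[where x="(i, j)"])
next
  fix c assume "c \<in> (\<lambda>(i, j). (s - int i, t - int j)) ` ({k..q1} \<times> {l..q2})"
  then obtain i j where ij: "k \<le> i" "i \<le> q1" "l \<le> j" "j \<le> q2" "c = (s - int i, t - int j)" by auto
  have e1: "c = (\<lambda>(i, j). (s - int i, t - int j)) (i, j)" using ij by simp
  have e2: "c = (\<lambda>(i, j). (s - int k - int i, t - int l - int j)) (i - k, j - l)" using ij by auto
  have m1: "c \<in> Bx q1 q2 s t"
    unfolding Bx_def by (rule image_eqI[where x="(i, j)"]) (use ij in auto)
  have m2: "c \<in> Bx q1 q2 (s - int k) (t - int l)"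
    unfolding Bx_def by (rule image_eqI[where x="(i - k, j - l)"]) (use ij in auto)
  from m1 m2 show "c \<in> Bx q1 q2 s t \<inter> Bx q1 q2 (s - int k) (t - int l)" by blast
qed

lemma sum_inter:
  assumes "k \<le> q1" "l \<le> q2"
  shows "(\<Sum>c\<in>Bx q1 q2 s t \<inter> Bx q1 q2 (s - int k) (t - int l). f (idx s t c) (idx (s - int k) (t - int l) c))
       = (\<Sum>i\<in>{k..q1}. \<Sum>j\<in>{l..q2}. f (i, j) (i - k, j - l))"
  unfolding Bx_inter[OF assms]
  by (subst sum.reindex[OF inj_Bx]) (auto simp: idx_def sum.cartesian_product case_prod_beta nat_diff_distrib intro!: sum.cong)

lemma phi_eq:
  fixes PZ :: "(nat \<times> nat) set pmf"
  shows "(\<integral>z. u1 ^ (if P \<and> a \<in> z then 1 else 0) * u2 ^ (if Q \<and> b \<in> z then 1 else 0) \<partial>measure_pmf PZ)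
    = 1 + (if P then (u1 - 1) * measure_pmf.prob PZ {z. a \<in> z} else 0)
        + (if Q then (u2 - 1) * measure_pmf.prob PZ {z. b \<in> z} else 0)
        + (if P \<and> Q then (u1 - 1) * (u2 - 1) * pZ PZ a b else 0)"
proof -
  define A where "A = {z. a \<in> z}"
  define B where "B = {z::(nat \<times> nat) set. b \<in> z}"
  define c1 where "c1 = (if P then u1 - 1 else 0)"
  define c2 where "c2 = (if Q then u2 - 1 else 0)"
  define c3 where "c3 = (if P \<and> Q then (u1 - 1) * (u2 - 1) else 0)"
  have pt: "u1 ^ (if P \<and> a \<in> z then 1 else 0) * u2 ^ (if Q \<and> b \<in> z then 1 else 0)
     = 1 + c1 * indicator A z + c2 * indicator B z + c3 * indicator (A \<inter> B) z" for z
    by (auto simp: c1_def c2_def c3_def A_def B_def indicator_def algebra_simps)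
  have "(\<integral>z. 1 + c1 * indicator A z + c2 * indicator B z + c3 * indicator (A \<inter> B) z \<partial>measure_pmf PZ)
      = 1 + c1 * measure_pmf.prob PZ A + c2 * measure_pmf.prob PZ B + c3 * measure_pmf.prob PZ (A \<inter> B)"
    by (simp add: integrable_real_indicator measure_pmf.emeasure_finite less_top[symmetric])
  moreover have "A \<inter> B = {z. a \<in> z \<and> b \<in> z}" by (auto simp: A_def B_def)
  ultimately show ?thesis
    unfolding pt by (simp add: c1_def c2_def c3_def A_def B_def pZ_def)
qed

lemma pgf_M:
  fixes u1 u2 :: real
  assumes "prob_space M"
    and ind: "prob_space.indep_vars M (\<lambda>_. count_space UNIV) (inma_family eps Z) UNIV"
    and \<mu>: "\<mu> > 0"
    and de: "\<And>st. distr M (count_space UNIV) (eps st) = measure_pmf (poisson_pmf \<mu>)"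
    and dZ: "\<And>str. distr M (count_space UNIV) (Z str) = measure_pmf PZ"
    and b: "\<And>i j. i \<le> q1 \<Longrightarrow> j \<le> q2 \<Longrightarrow> measure_pmf.prob PZ {A. (i, j) \<in> A} = \<beta> i j"
    and kl: "k \<le> q1" "l \<le> q2"
    and u: "\<bar>u1\<bar> \<le> 1" "\<bar>u2\<bar> \<le> 1"
  shows "(\<integral>\<omega>. u1 ^ inma_field q1 q2 eps Z s t \<omega> * u2 ^ inma_field q1 q2 eps Z (s - int k) (t - int l) \<omega> \<partial>M)
    = exp (\<mu> * ((u1 - 1) * (\<Sum>i\<in>{0..q1}. \<Sum>j\<in>{0..q2}. \<beta> i j) + (u2 - 1) * (\<Sum>i\<in>{0..q1}. \<Sum>j\<in>{0..q2}. \<beta> i j)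
         + (u1 - 1) * (u2 - 1) * (\<Sum>i\<in>{k..q1}. \<Sum>j\<in>{l..q2}. pZ PZ (i, j) (i - k, j - l))))"
proof -
  interpret prob_space M by fact
  define B1 where "B1 = Bx q1 q2 s t"
  define B2 where "B2 = Bx q1 q2 (s - int k) (t - int l)"
  define C where "C = B1 \<union> B2"
  define i1 where "i1 = idx s t"
  define i2 where "i2 = idx (s - int k) (t - int l)"
  define G where "G c z = u1 ^ (if c \<in> B1 \<and> i1 c \<in> z then 1 else 0) * u2 ^ (if c \<in> B2 \<and> i2 c \<in> z then 1 else 0)"
    for c and z :: "(nat \<times> nat) set"
  have finC: "finite C" by (simp add: C_def B1_def B2_def finite_Bx)
  have Gb: "\<bar>G c z\<bar> \<le> 1" for c z
    using u by (auto simp: G_def abs_mult intro: mult_le_one)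
  have X1: "inma_field q1 q2 eps Z s t \<omega> = (\<Sum>c\<in>C. \<Sum>r\<in>{1..eps c \<omega>}. (if c \<in> B1 \<and> i1 c \<in> Z (fst c, snd c, r) \<omega> then 1 else 0))" for \<omega>
    unfolding X_cells B1_def[symmetric] i1_def[symmetric]
    by (rule sum.mono_neutral_cong_left) (auto simp: finC C_def B1_def B2_def finite_Bx)
  have X2: "inma_field q1 q2 eps Z (s - int k) (t - int l) \<omega> = (\<Sum>c\<in>C. \<Sum>r\<in>{1..eps c \<omega>}. (if c \<in> B2 \<and> i2 c \<in> Z (fst c, snd c, r) \<omega> then 1 else 0))" for \<omega>
    unfolding X_cells B2_def[symmetric] i2_def[symmetric]
    by (rule sum.mono_neutral_cong_left) (auto simp: finC C_def B1_def B2_def finite_Bx)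
  have pw: "u1 ^ inma_field q1 q2 eps Z s t \<omega> * u2 ^ inma_field q1 q2 eps Z (s - int k) (t - int l) \<omega>
      = (\<Prod>c\<in>C. \<Prod>r\<in>{1..eps c \<omega>}. G c (Z (fst c, snd c, r) \<omega>))" for \<omega>
    unfolding X1 X2 power_sum G_def prod.distrib ..
  have indH: "indep_vars (\<lambda>_. borel) (\<lambda>c \<omega>. \<Prod>r\<in>{1..eps c \<omega>}. G c (Z (fst c, snd c, r) \<omega>)) C"
    by (rule cells_indep[OF \<open>prob_space M\<close> ind])
  have intH: "integrable M (\<lambda>\<omega>. \<Prod>r\<in>{1..eps c \<omega>}. G c (Z (fst c, snd c, r) \<omega>))" if "c \<in> C" for c
  proof (rule integrable_const_bound[where B=1])
    show "AE x in M. norm (\<Prod>r\<in>{1..eps c x}. G c (Z (fst c, snd c, r) x)) \<le> 1"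
      by (auto simp: abs_prod intro!: prod_le_1 Gb)
    show "(\<lambda>\<omega>. \<Prod>r\<in>{1..eps c \<omega>}. G c (Z (fst c, snd c, r) \<omega>)) \<in> borel_measurable M"
      using indH that by (auto simp: indep_vars_def)
  qed
  have "(\<integral>\<omega>. u1 ^ inma_field q1 q2 eps Z s t \<omega> * u2 ^ inma_field q1 q2 eps Z (s - int k) (t - int l) \<omega> \<partial>M)
      = (\<Prod>c\<in>C. \<integral>\<omega>. (\<Prod>r\<in>{1..eps c \<omega>}. G c (Z (fst c, snd c, r) \<omega>)) \<partial>M)"
    unfolding pw by (rule indep_vars_lebesgue_integral[OF finC indH intH])
  also have "\<dots> = (\<Prod>c\<in>C. exp (\<mu> * ((\<integral>z. G c z \<partial>measure_pmf PZ) - 1)))"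
    by (intro prod.cong refl cell_pgf[OF \<open>prob_space M\<close> ind \<mu> de dZ Gb])
  also have "\<dots> = exp (\<Sum>c\<in>C. \<mu> * ((\<integral>z. G c z \<partial>measure_pmf PZ) - 1))"
    by (simp add: exp_sum finC)
  also have "(\<Sum>c\<in>C. \<mu> * ((\<integral>z. G c z \<partial>measure_pmf PZ) - 1))
      = \<mu> * ((u1 - 1) * (\<Sum>c\<in>C. if c \<in> B1 then measure_pmf.prob PZ {z. i1 c \<in> z} else 0)
            + (u2 - 1) * (\<Sum>c\<in>C. if c \<in> B2 then measure_pmf.prob PZ {z. i2 c \<in> z} else 0)
            + (u1 - 1) * (u2 - 1) * (\<Sum>c\<in>C. if c \<in> B1 \<and> c \<in> B2 then pZ PZ (i1 c) (i2 c) else 0))"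
  proof -
    have phic: "\<mu> * ((\<integral>z. G c z \<partial>measure_pmf PZ) - 1) =
       \<mu> * (u1 - 1) * (if c \<in> B1 then measure_pmf.prob PZ {z. i1 c \<in> z} else 0)
     + \<mu> * (u2 - 1) * (if c \<in> B2 then measure_pmf.prob PZ {z. i2 c \<in> z} else 0)
     + \<mu> * (u1 - 1) * (u2 - 1) * (if c \<in> B1 \<and> c \<in> B2 then pZ PZ (i1 c) (i2 c) else 0)" for c
      unfolding G_def phi_eq by (cases "c \<in> B1"; cases "c \<in> B2"; simp add: algebra_simps)
    show ?thesis
      unfolding phic sum.distrib sum_distrib_left[symmetric] by (simp add: algebra_simps)
  qed
  also have "(\<Sum>c\<in>C. if c \<in> B1 then measure_pmf.prob PZ {z. i1 c \<in> z} else 0) = (\<Sum>i\<in>{0..q1}. \<Sum>j\<in>{0..q2}. \<beta> i j)"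
  proof -
    have "(\<Sum>c\<in>C. if c \<in> B1 then measure_pmf.prob PZ {z. i1 c \<in> z} else 0) = (\<Sum>c\<in>B1. measure_pmf.prob PZ {z. i1 c \<in> z})"
      using sum.inter_restrict[OF finC, of "\<lambda>c. measure_pmf.prob PZ {z. i1 c \<in> z}" B1]
      by (simp add: C_def Int_absorb1)
    also have "\<dots> = (\<Sum>i\<in>{0..q1}. \<Sum>j\<in>{0..q2}. measure_pmf.prob PZ {z. (i, j) \<in> z})"
      unfolding B1_def i1_def by (rule sum_Bx)
    also have "\<dots> = (\<Sum>i\<in>{0..q1}. \<Sum>j\<in>{0..q2}. \<beta> i j)"
      by (intro sum.cong refl b) auto
    finally show ?thesis .
  qed
  also have "(\<Sum>c\<in>C. if c \<in> B2 then measure_pmf.prob PZ {z. i2 c \<in> z} else 0) = (\<Sum>i\<in>{0..q1}. \<Sum>j\<in>{0..q2}. \<beta> i j)"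
  proof -
    have "(\<Sum>c\<in>C. if c \<in> B2 then measure_pmf.prob PZ {z. i2 c \<in> z} else 0) = (\<Sum>c\<in>B2. measure_pmf.prob PZ {z. i2 c \<in> z})"
      using sum.inter_restrict[OF finC, of "\<lambda>c. measure_pmf.prob PZ {z. i2 c \<in> z}" B2]
      by (simp add: C_def Int_absorb1)
    also have "\<dots> = (\<Sum>i\<in>{0..q1}. \<Sum>j\<in>{0..q2}. measure_pmf.prob PZ {z. (i, j) \<in> z})"
      unfolding B2_def i2_def by (rule sum_Bx)
    also have "\<dots> = (\<Sum>i\<in>{0..q1}. \<Sum>j\<in>{0..q2}. \<beta> i j)"
      by (intro sum.cong refl b) auto
    finally show ?thesis .
  qed
  also have "(\<Sum>c\<in>C. if c \<in> B1 \<and> c \<in> B2 then pZ PZ (i1 c) (i2 c) else 0)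
      = (\<Sum>i\<in>{k..q1}. \<Sum>j\<in>{l..q2}. pZ PZ (i, j) (i - k, j - l))"
  proof -
    have "(\<Sum>c\<in>C. if c \<in> B1 \<and> c \<in> B2 then pZ PZ (i1 c) (i2 c) else 0) = (\<Sum>c\<in>B1 \<inter> B2. pZ PZ (i1 c) (i2 c))"
    proof -
      have eqset: "C \<inter> (B1 \<inter> B2) = B1 \<inter> B2" unfolding C_def by blast
      show ?thesis
        using sum.inter_restrict[OF finC, of "\<lambda>c. pZ PZ (i1 c) (i2 c)" "B1 \<inter> B2"] eqset by simp
    qed
    also have "\<dots> = (\<Sum>i\<in>{k..q1}. \<Sum>j\<in>{l..q2}. pZ PZ (i, j) (i - k, j - l))"
      unfolding B1_def B2_def i1_def i2_def by (rule sum_inter[OF kl])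
    finally show ?thesis .
  qed
  finally show ?thesis .
qed

lemma powser_unique:
  fixes c d :: "nat \<Rightarrow> real"
  assumes cb: "\<And>m. \<bar>c m\<bar> \<le> B" and db: "\<And>m. \<bar>d m\<bar> \<le> B"
    and eq: "\<And>u. 0 < u \<Longrightarrow> u < 1 \<Longrightarrow> (\<Sum>m. c m * u ^ m) = (\<Sum>m. d m * u ^ m)"
  shows "c = d"
proof -
  define e where "e m = c m - d m" for m
  have eb: "\<bar>e m\<bar> \<le> 2 * B" for m using cb[of m] db[of m] by (simp add: e_def)
  have sumb: "summable (\<lambda>m. f m * u ^ m)" if "\<And>m. \<bar>f m\<bar> \<le> C" "\<bar>u\<bar> < 1" for f :: "nat \<Rightarrow> real" and C u
  proof (rule summable_comparison_test[OF _ summable_mult[OF summable_geometric[of "\<bar>u\<bar>"], of C]])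
    show "\<exists>N. \<forall>n\<ge>N. norm (f n * u ^ n) \<le> C * \<bar>u\<bar> ^ n"
      using that by (auto simp: abs_mult power_abs intro!: mult_right_mono)
  qed (use that in auto)
  have e0: "(\<Sum>m. e m * u ^ m) = 0" if "0 < u" "u < 1" for u
  proof -
    have "(\<Sum>m. e m * u ^ m) = (\<Sum>m. c m * u ^ m - d m * u ^ m)" by (simp add: e_def algebra_simps)
    also have "\<dots> = (\<Sum>m. c m * u ^ m) - (\<Sum>m. d m * u ^ m)"
      by (rule suminf_diff[symmetric]; rule sumb) (use that cb db in auto)
    finally show ?thesis using eq[OF that] by simp
  qed
  have "e m = 0" for m
  proof (induction m rule: less_induct)
    case (less m)
    define f where "f x = (\<Sum>j. e (j + m) * x ^ j)" for x :: real
    have fz: "f u = 0" if "0 < u" "u < 1" for u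
    proof -
      have s1: "summable (\<lambda>j. e j * u ^ j)" by (rule sumb[OF eb]) (use that in auto)
      have "(\<Sum>j. e j * u ^ j) = (\<Sum>j. e (j + m) * u ^ (j + m)) + (\<Sum>i<m. e i * u ^ i)"
        by (rule suminf_split_initial_segment[OF s1])
      also have "(\<Sum>i<m. e i * u ^ i) = 0" using less by simp
      also have "(\<Sum>j. e (j + m) * u ^ (j + m)) = u ^ m * f u"
      proof -
        have s2: "summable (\<lambda>j. e (j + m) * u ^ j)" by (rule sumb[OF eb]) (use that in auto)
        have "(\<Sum>j. e (j + m) * u ^ (j + m)) = (\<Sum>j. u ^ m * (e (j + m) * u ^ j))"
          by (simp add: power_add algebra_simps)
        also have "\<dots> = u ^ m * f u" unfolding f_def by (rule suminf_mult[OF s2])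
        finally show ?thesis .
      qed
      finally have "u ^ m * f u = 0" using e0[OF that] by simp
      then show ?thesis using that by simp
    qed
    have cont: "isCont f 0"
      unfolding f_def
      by (rule isCont_powser[where K="1/2"]) (rule sumb[OF eb], auto)
    have "(f \<longlongrightarrow> f 0) (at_right 0)"
      using cont by (simp add: isCont_def tendsto_mono[OF at_within_le_at])
    moreover have "(f \<longlongrightarrow> 0) (at_right 0)"
    proof (rule tendsto_eventually)
      show "\<forall>\<^sub>F x in at_right 0. f x = 0"
        unfolding eventually_at_right_field by (rule exI[of _ 1]) (auto intro: fz)
    qed
    ultimately have "f 0 = 0" by (rule tendsto_unique[OF trivial_limit_at_right_real])
    moreover have "f 0 = e m" unfolding f_def by (simp add: powser_zero)
    ultimately show ?case by simp
  qed
  then show ?thesis by (auto simp: e_def fun_eq_iff)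
qed

lemma powser2_unique:
  fixes a b :: "nat \<Rightarrow> nat \<Rightarrow> real"
  assumes ab: "\<And>m n. \<bar>a m n\<bar> \<le> 1" and bb: "\<And>m n. \<bar>b m n\<bar> \<le> 1"
    and eq: "\<And>u v. 0 < u \<Longrightarrow> u < 1 \<Longrightarrow> 0 < v \<Longrightarrow> v < 1 \<Longrightarrow>
       (\<Sum>m. (\<Sum>n. a m n * v ^ n) * u ^ m) = (\<Sum>m. (\<Sum>n. b m n * v ^ n) * u ^ m)"
  shows "a = b"
proof -
  have bnd: "\<bar>\<Sum>n. f n * v ^ n\<bar> \<le> 1 / (1 - v)" if "\<And>n. \<bar>f n\<bar> \<le> 1" "0 < v" "v < 1" for f :: "nat \<Rightarrow> real" and v
  proof -
    have sg: "summable (\<lambda>n. v ^ n)" using that by (simp add: summable_geometric)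
    have sa: "summable (\<lambda>n. norm (f n * v ^ n))"
      by (rule summable_comparison_test[OF _ sg]) (use that in \<open>auto simp: abs_mult intro!: mult_left_le_one_le\<close>)
    have "\<bar>\<Sum>n. f n * v ^ n\<bar> \<le> (\<Sum>n. norm (f n * v ^ n))"
      using summable_norm[OF sa] by simp
    also have "\<dots> \<le> (\<Sum>n. v ^ n)"
      by (rule suminf_le[OF _ sa sg]) (use that in \<open>auto simp: abs_mult intro!: mult_left_le_one_le\<close>)
    also have "\<dots> = 1 / (1 - v)" using suminf_geometric[of v] that by simp
    finally show ?thesis .
  qed
  have rows: "(\<lambda>m. \<Sum>n. a m n * v ^ n) = (\<lambda>m. \<Sum>n. b m n * v ^ n)" if "0 < v" "v < 1" for v
    by (rule powser_unique[where B="1 / (1 - v)"]) (use that ab bb eq bnd in auto)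
  have "a m = b m" for m
  proof (rule powser_unique[where B=1])
    fix u :: real assume u: "0 < u" "u < 1"
    show "(\<Sum>n. a m n * u ^ n) = (\<Sum>n. b m n * u ^ n)"
      using fun_cong[OF rows[OF u], of m] by simp
  qed (use ab bb in auto)
  then show ?thesis by auto
qed

lemma (in prob_space) summable_prob_eq:
  fixes N :: "'a \<Rightarrow> nat"
  assumes N: "N \<in> measurable M (count_space UNIV)"
  shows "summable (\<lambda>n. prob {\<omega> \<in> space M. N \<omega> = n})"
proof -
  have mN: "{\<omega> \<in> space M. N \<omega> = n} \<in> sets M" for n
    using N by (auto intro!: measurable_sets_Collect)
  have "(\<lambda>n. prob {\<omega> \<in> space M. N \<omega> = n}) sums prob (\<Union>n. {\<omega> \<in> space M. N \<omega> = n})"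
    by (rule finite_measure_UNION) (use mN in \<open>auto simp: disjoint_family_on_def\<close>)
  then show ?thesis by (simp add: sums_iff)
qed

lemma (in prob_space) pgf2_sums:
  fixes X Y :: "'a \<Rightarrow> nat" and u v :: real
  assumes X: "X \<in> measurable M (count_space UNIV)" and Y: "Y \<in> measurable M (count_space UNIV)"
    and u: "\<bar>u\<bar> \<le> 1" and v: "\<bar>v\<bar> \<le> 1"
  shows "(\<lambda>m. (\<Sum>n. prob {\<omega> \<in> space M. X \<omega> = m \<and> Y \<omega> = n} * v ^ n) * u ^ m) sums (\<integral>\<omega>. u ^ X \<omega> * v ^ Y \<omega> \<partial>M)"
proof -
  define h where "h \<omega> = u ^ X \<omega> * v ^ Y \<omega>" for \<omega>
  have hb: "\<bar>h \<omega>\<bar> \<le> 1" for \<omega>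
    using u v by (auto simp: h_def abs_mult power_abs intro!: mult_le_one power_le_one)
  have mh: "h \<in> borel_measurable M" unfolding h_def using X Y by measurable
  have S1: "(\<lambda>m. \<integral>\<omega>. (if X \<omega> = m then h \<omega> else 0) \<partial>M) sums (\<integral>\<omega>. h \<omega> \<partial>M)"
    by (rule sums_if_integral[OF X mh]) (use hb in auto)
  have row: "(\<integral>\<omega>. (if X \<omega> = m then h \<omega> else 0) \<partial>M) = (\<Sum>n. prob {\<omega> \<in> space M. X \<omega> = m \<and> Y \<omega> = n} * v ^ n) * u ^ m" for m
  proof -
    define P where "P n = prob {\<omega> \<in> space M. X \<omega> = m \<and> Y \<omega> = n}" for n
    have mP: "{\<omega> \<in> space M. X \<omega> = m \<and> Y \<omega> = n} \<in> sets M" for n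
      using X Y by measurable
    have mh': "(\<lambda>\<omega>. if X \<omega> = m then h \<omega> else 0) \<in> borel_measurable M" using mh X by measurable
    have S2: "(\<lambda>n. \<integral>\<omega>. (if Y \<omega> = n then (if X \<omega> = m then h \<omega> else 0) else 0) \<partial>M) sums (\<integral>\<omega>. (if X \<omega> = m then h \<omega> else 0) \<partial>M)"
      by (rule sums_if_integral[OF Y mh']) (use hb in auto)
    have tn: "(\<integral>\<omega>. (if Y \<omega> = n then (if X \<omega> = m then h \<omega> else 0) else 0) \<partial>M) = u ^ m * (P n * v ^ n)" for n
    proof -
      have "(\<integral>\<omega>. (if Y \<omega> = n then (if X \<omega> = m then h \<omega> else 0) else 0) \<partial>M)
          = (\<integral>\<omega>. (u ^ m * v ^ n) * indicator {\<omega> \<in> space M. X \<omega> = m \<and> Y \<omega> = n} \<omega> \<partial>M)"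
        by (rule Bochner_Integration.integral_cong) (auto simp: h_def indicator_def)
      also have "\<dots> = u ^ m * (P n * v ^ n)" using mP[of n] by (simp add: P_def)
      finally show ?thesis .
    qed
    have sP: "summable (\<lambda>n. P n * v ^ n)"
    proof (rule summable_comparison_test[OF _ summable_prob_eq[OF Y]])
      have Ple: "P n \<le> prob {\<omega> \<in> space M. Y \<omega> = n}" for n
        unfolding P_def by (rule finite_measure_mono) (use Y in \<open>auto intro!: measurable_sets_Collect\<close>)
      show "\<exists>N. \<forall>n\<ge>N. norm (P n * v ^ n) \<le> prob {\<omega> \<in> space M. Y \<omega> = n}"
      proof (intro exI allI impI)
        fix n :: nat
        have "norm (P n * v ^ n) = P n * \<bar>v\<bar> ^ n" by (simp add: abs_mult power_abs P_def)
        also have "\<dots> \<le> P n * 1"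
          by (rule mult_left_mono) (use v in \<open>auto simp: P_def intro: power_le_one\<close>)
        also have "\<dots> \<le> prob {\<omega> \<in> space M. Y \<omega> = n}" using Ple[of n] by simp
        finally show "norm (P n * v ^ n) \<le> prob {\<omega> \<in> space M. Y \<omega> = n}" .
      qed
    qed
    from S2 have "(\<lambda>n. u ^ m * (P n * v ^ n)) sums (\<integral>\<omega>. (if X \<omega> = m then h \<omega> else 0) \<partial>M)"
      unfolding tn .
    moreover have "(\<lambda>n. u ^ m * (P n * v ^ n)) sums (u ^ m * (\<Sum>n. P n * v ^ n))"
      by (rule sums_mult[OF summable_sums[OF sP]])
    ultimately show ?thesis unfolding P_def by (simp add: sums_iff mult.commute)
  qed
  from S1 have "(\<lambda>m. (\<Sum>n. prob {\<omega> \<in> space M. X \<omega> = m \<and> Y \<omega> = n} * v ^ n) * u ^ m) sums (\<integral>\<omega>. h \<omega> \<partial>M)"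
    unfolding row .
  then show ?thesis unfolding h_def .
qed

lemma distr_eq_from_pgf:
  fixes X Y :: "'a \<Rightarrow> nat" and Q :: "(nat \<times> nat) pmf"
  assumes "prob_space M"
    and X: "X \<in> measurable M (count_space UNIV)" and Y: "Y \<in> measurable M (count_space UNIV)"
    and eq: "\<And>u v :: real. 0 < u \<Longrightarrow> u < 1 \<Longrightarrow> 0 < v \<Longrightarrow> v < 1 \<Longrightarrow>
       (\<integral>\<omega>. u ^ X \<omega> * v ^ Y \<omega> \<partial>M) = (\<integral>x. u ^ fst x * v ^ snd x \<partial>measure_pmf Q)"
  shows "distr M (count_space UNIV) (\<lambda>\<omega>. (X \<omega>, Y \<omega>)) = measure_pmf Q"
proof -
  interpret prob_space M by fact
  define a where "a m n = prob {\<omega> \<in> space M. X \<omega> = m \<and> Y \<omega> = n}" for m n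
  define b where "b m n = measure_pmf.prob Q {x \<in> space (measure_pmf Q). fst x = m \<and> snd x = n}" for m n
  have bq: "b m n = pmf Q (m, n)" for m n
  proof -
    have "{x \<in> space (measure_pmf Q). fst x = m \<and> snd x = n} = {(m, n)}" by auto
    then show ?thesis by (simp add: b_def measure_pmf_single)
  qed
  have "a = b"
  proof (rule powser2_unique)
    show "\<bar>a m n\<bar> \<le> 1" for m n by (simp add: a_def)
    show "\<bar>b m n\<bar> \<le> 1" for m n by (simp add: b_def)
    fix u v :: real assume uv: "0 < u" "u < 1" "0 < v" "v < 1"
    have s1: "(\<lambda>m. (\<Sum>n. a m n * v ^ n) * u ^ m) sums (\<integral>\<omega>. u ^ X \<omega> * v ^ Y \<omega> \<partial>M)"
      unfolding a_def by (rule pgf2_sums[OF X Y]) (use uv in auto)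
    have s2: "(\<lambda>m. (\<Sum>n. b m n * v ^ n) * u ^ m) sums (\<integral>x. u ^ fst x * v ^ snd x \<partial>measure_pmf Q)"
      unfolding b_def by (rule measure_pmf.pgf2_sums) (use uv in auto)
    show "(\<Sum>m. (\<Sum>n. a m n * v ^ n) * u ^ m) = (\<Sum>m. (\<Sum>n. b m n * v ^ n) * u ^ m)"
      using s1 s2 eq[OF uv] by (simp add: sums_iff)
  qed
  have mXY: "(\<lambda>\<omega>. (X \<omega>, Y \<omega>)) \<in> measurable M (count_space UNIV)"
  proof (subst measurable_count_space_eq2_countable, intro conjI ballI)
    fix p :: "nat \<times> nat"
    have "(\<lambda>\<omega>. (X \<omega>, Y \<omega>)) -` {p} \<inter> space M = {\<omega> \<in> space M. X \<omega> = fst p \<and> Y \<omega> = snd p}"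
      by (cases p) auto
    also have "\<dots> \<in> sets M" using X Y by measurable
    finally show "(\<lambda>\<omega>. (X \<omega>, Y \<omega>)) -` {p} \<inter> space M \<in> sets M" .
  qed auto
  show ?thesis
  proof (rule measure_eqI_countable[where A=UNIV])
    fix p :: "nat \<times> nat"
    obtain m n where p: "p = (m, n)" by (cases p)
    have "emeasure (distr M (count_space UNIV) (\<lambda>\<omega>. (X \<omega>, Y \<omega>))) {p} = emeasure M ((\<lambda>\<omega>. (X \<omega>, Y \<omega>)) -` {p} \<inter> space M)"
      by (rule emeasure_distr[OF mXY]) simp
    also have "(\<lambda>\<omega>. (X \<omega>, Y \<omega>)) -` {p} \<inter> space M = {\<omega> \<in> space M. X \<omega> = m \<and> Y \<omega> = n}"
      by (auto simp: p)
    also have "emeasure M \<dots> = ennreal (a m n)" unfolding a_def by (rule emeasure_eq_measure)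
    also have "\<dots> = ennreal (pmf Q p)" using \<open>a = b\<close> bq p by simp
    also have "\<dots> = emeasure (measure_pmf Q) {p}" by (simp add: emeasure_pmf_single)
    finally show "emeasure (distr M (count_space UNIV) (\<lambda>\<omega>. (X \<omega>, Y \<omega>))) {p} = emeasure (measure_pmf Q) {p}" .
  qed auto
qed

lemma pmf_nat_integral:
  fixes p :: "nat pmf" and f :: "nat \<Rightarrow> real"
  assumes s: "summable (\<lambda>n. \<bar>pmf p n * f n\<bar>)"
  shows "integrable (measure_pmf p) f" and "(\<lambda>n. pmf p n * f n) sums (\<integral>x. f x \<partial>measure_pmf p)"
proof -
  have ic: "integrable (count_space UNIV) (\<lambda>n. pmf p n * f n)"
    using s by (simp add: integrable_count_space_nat_iff)
  have "integrable (density (count_space UNIV) (\<lambda>x. ennreal (pmf p x))) f"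
    by (subst integrable_density) (use ic in auto)
  then show "integrable (measure_pmf p) f" by (simp add: measure_pmf_eq_density)
  have "(\<integral>x. f x \<partial>measure_pmf p) = (\<integral>x. f x \<partial>density (count_space UNIV) (\<lambda>x. ennreal (pmf p x)))"
    by (simp add: measure_pmf_eq_density)
  also have "\<dots> = (\<integral>x. pmf p x * f x \<partial>count_space UNIV)"
    by (subst integral_density) auto
  finally show "(\<lambda>n. pmf p n * f n) sums (\<integral>x. f x \<partial>measure_pmf p)"
    using sums_integral_count_space_nat[OF ic] by simp
qed

lemma poi_sum1: "0 \<le> r \<Longrightarrow> (\<lambda>n. pmf (poi r) n) sums 1"
  using poi_sums[of r 1] by simp

lemma poi_mom1: assumes r: "0 \<le> r" shows "(\<lambda>n. pmf (poi r) n * real n) sums r"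
proof -
  have "(\<lambda>n. pmf (poi r) (Suc n) * real (Suc n)) = (\<lambda>n. r * pmf (poi r) n)"
  proof (rule ext)
    fix n
    have "fact n \<noteq> (0::real)" "real (Suc n) \<noteq> 0" by auto
    then show "pmf (poi r) (Suc n) * real (Suc n) = r * pmf (poi r) n"
      by (simp add: pmf_poi[OF r] fact_Suc field_simps del: of_nat_Suc)
  qed
  moreover have "(\<lambda>n. r * pmf (poi r) n) sums (r * 1)" by (rule sums_mult[OF poi_sum1[OF r]])
  ultimately have "(\<lambda>n. pmf (poi r) (Suc n) * real (Suc n)) sums r" by simp
  then show ?thesis by (subst (asm) sums_Suc_iff) simp
qed

lemma poi_momf: assumes r: "0 \<le> r" shows "(\<lambda>n. pmf (poi r) n * (real n * (real n - 1))) sums (r ^ 2)"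
proof -
  let ?f = "\<lambda>n. pmf (poi r) n * (real n * (real n - 1))"
  have "(\<lambda>n. ?f (Suc (Suc n))) = (\<lambda>n. r ^ 2 * pmf (poi r) n)"
  proof (rule ext)
    fix n
    have "fact n \<noteq> (0::real)" "real (Suc n) \<noteq> 0" "real (Suc (Suc n)) \<noteq> 0" by auto
    moreover have "real (Suc (Suc n)) * (real (Suc (Suc n)) - 1) = real (Suc (Suc n)) * real (Suc n)" by simp
    ultimately show "?f (Suc (Suc n)) = r ^ 2 * pmf (poi r) n"
      by (simp add: pmf_poi[OF r] fact_Suc field_simps power2_eq_square del: of_nat_Suc)
  qed
  moreover have "(\<lambda>n. r ^ 2 * pmf (poi r) n) sums (r ^ 2 * 1)" by (rule sums_mult[OF poi_sum1[OF r]])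
  ultimately have "(\<lambda>n. ?f (Suc (Suc n))) sums (r ^ 2)" by simp
  then have "(\<lambda>n. ?f (Suc n)) sums (r ^ 2)" by (subst (asm) sums_Suc_iff) simp
  then show ?thesis by (subst (asm) sums_Suc_iff) simp
qed

lemma poi_mom2: assumes r: "0 \<le> r" shows "(\<lambda>n. pmf (poi r) n * real n ^ 2) sums (r ^ 2 + r)"
proof -
  have "(\<lambda>n. pmf (poi r) n * (real n * (real n - 1)) + pmf (poi r) n * real n) sums (r ^ 2 + r)"
    by (rule sums_add[OF poi_momf[OF r] poi_mom1[OF r]])
  moreover have "(\<lambda>n. pmf (poi r) n * (real n * (real n - 1)) + pmf (poi r) n * real n) = (\<lambda>n. pmf (poi r) n * real n ^ 2)"
    by (rule ext) (simp add: algebra_simps power2_eq_square)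
  ultimately show ?thesis by simp
qed

lemma poi_int:
  assumes r: "0 \<le> r"
  shows "integrable (measure_pmf (poi r)) (\<lambda>n. real n)" "(\<integral>n. real n \<partial>measure_pmf (poi r)) = r"
    and "integrable (measure_pmf (poi r)) (\<lambda>n. real n ^ 2)" "(\<integral>n. real n ^ 2 \<partial>measure_pmf (poi r)) = r ^ 2 + r"
proof -
  have s1: "summable (\<lambda>n. \<bar>pmf (poi r) n * real n\<bar>)"
    using poi_mom1[OF r] by (simp add: sums_iff)
  show "integrable (measure_pmf (poi r)) (\<lambda>n. real n)" by (rule pmf_nat_integral(1)[OF s1])
  show "(\<integral>n. real n \<partial>measure_pmf (poi r)) = r"
    using pmf_nat_integral(2)[OF s1] poi_mom1[OF r] by (simp add: sums_iff)
  have s2: "summable (\<lambda>n. \<bar>pmf (poi r) n * real n ^ 2\<bar>)"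
    using poi_mom2[OF r] by (simp add: sums_iff)
  show "integrable (measure_pmf (poi r)) (\<lambda>n. real n ^ 2)" by (rule pmf_nat_integral(1)[OF s2])
  show "(\<integral>n. real n ^ 2 \<partial>measure_pmf (poi r)) = r ^ 2 + r"
    using pmf_nat_integral(2)[OF s2] poi_mom2[OF r] by (simp add: sums_iff)
qed

lemma poi_pgf:
  assumes r: "0 \<le> r" and x: "\<bar>x\<bar> \<le> 1"
  shows "(\<integral>n. x ^ n \<partial>measure_pmf (poi r)) = exp (r * (x - 1))"
proof -
  have "(\<lambda>n. pmf (poi r) n * x ^ n) sums (\<integral>n. x ^ n \<partial>measure_pmf (poi r))"
    by (rule pmf_nat_sums[where B=1]) (use x in \<open>auto simp: power_abs intro: power_le_one\<close>)
  with poi_sums[OF r, of x] show ?thesis by (simp add: sums_iff)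
qed

lemma pair_prod_int:
  fixes f :: "'a \<Rightarrow> real" and g :: "'b \<Rightarrow> real"
  assumes f0: "\<And>a. 0 \<le> f a" and g0: "\<And>b. 0 \<le> g b"
    and fi: "integrable (measure_pmf p) f" and gi: "integrable (measure_pmf q) g"
  shows "integrable (measure_pmf (pair_pmf p q)) (\<lambda>x. f (fst x) * g (snd x))"
    and "(\<integral>x. f (fst x) * g (snd x) \<partial>measure_pmf (pair_pmf p q)) = (\<integral>a. f a \<partial>measure_pmf p) * (\<integral>b. g b \<partial>measure_pmf q)"
proof -
  have nf: "(\<integral>\<^sup>+a. ennreal (f a) \<partial>measure_pmf p) = ennreal (\<integral>a. f a \<partial>measure_pmf p)"
    by (rule nn_integral_eq_integral[OF fi]) (use f0 in auto)
  have ng: "(\<integral>\<^sup>+b. ennreal (g b) \<partial>measure_pmf q) = ennreal (\<integral>b. g b \<partial>measure_pmf q)"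
    by (rule nn_integral_eq_integral[OF gi]) (use g0 in auto)
  have "(\<integral>\<^sup>+x. ennreal (f (fst x) * g (snd x)) \<partial>measure_pmf (pair_pmf p q))
      = (\<integral>\<^sup>+a. \<integral>\<^sup>+b. ennreal (f a) * ennreal (g b) \<partial>measure_pmf q \<partial>measure_pmf p)"
    by (simp add: nn_integral_pair_pmf' ennreal_mult f0 g0)
  also have "\<dots> = (\<integral>\<^sup>+a. ennreal (f a) * (\<integral>\<^sup>+b. ennreal (g b) \<partial>measure_pmf q) \<partial>measure_pmf p)"
    by (simp add: nn_integral_cmult)
  also have "\<dots> = (\<integral>\<^sup>+a. ennreal (f a) \<partial>measure_pmf p) * (\<integral>\<^sup>+b. ennreal (g b) \<partial>measure_pmf q)"
    by (simp add: nn_integral_multc)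
  also have "\<dots> = ennreal ((\<integral>a. f a \<partial>measure_pmf p) * (\<integral>b. g b \<partial>measure_pmf q))"
    unfolding nf ng by (rule ennreal_mult[symmetric]) (use f0 g0 in \<open>auto intro: integral_nonneg_AE\<close>)
  finally have eq: "(\<integral>\<^sup>+x. ennreal (f (fst x) * g (snd x)) \<partial>measure_pmf (pair_pmf p q)) = ennreal ((\<integral>a. f a \<partial>measure_pmf p) * (\<integral>b. g b \<partial>measure_pmf q))" .
  have "integrable (measure_pmf (pair_pmf p q)) (\<lambda>x. f (fst x) * g (snd x)) \<and>
      (\<integral>x. f (fst x) * g (snd x) \<partial>measure_pmf (pair_pmf p q)) = (\<integral>a. f a \<partial>measure_pmf p) * (\<integral>b. g b \<partial>measure_pmf q)"
    by (rule nn_integral_eq_integrable[THEN iffD1, OF _ _ _ eq]) (use f0 g0 in \<open>auto intro!: mult_nonneg_nonneg integral_nonneg_AE\<close>)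
  then show "integrable (measure_pmf (pair_pmf p q)) (\<lambda>x. f (fst x) * g (snd x))"
    and "(\<integral>x. f (fst x) * g (snd x) \<partial>measure_pmf (pair_pmf p q)) = (\<integral>a. f a \<partial>measure_pmf p) * (\<integral>b. g b \<partial>measure_pmf q)"
    by auto
qed

lemma trip:
  fixes f1 :: "'a \<Rightarrow> real" and f2 :: "'b \<Rightarrow> real" and f3 :: "'c \<Rightarrow> real"
  assumes "\<And>a. 0 \<le> f1 a" "\<And>b. 0 \<le> f2 b" "\<And>c. 0 \<le> f3 c"
    and "integrable (measure_pmf p1) f1" "integrable (measure_pmf p2) f2" "integrable (measure_pmf p3) f3"
  shows "has_bochner_integral (measure_pmf (pair_pmf p1 (pair_pmf p2 p3)))
     (\<lambda>x. f1 (fst x) * (f2 (fst (snd x)) * f3 (snd (snd x))))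
     ((\<integral>a. f1 a \<partial>measure_pmf p1) * ((\<integral>b. f2 b \<partial>measure_pmf p2) * (\<integral>c. f3 c \<partial>measure_pmf p3)))"
proof -
  note in1 = pair_prod_int[of f2 f3 p2 p3, OF assms(2,3,5,6)]
  note in2 = pair_prod_int[of f1 "\<lambda>y. f2 (fst y) * f3 (snd y)" p1 "pair_pmf p2 p3", OF assms(1) _ assms(4) in1(1)]
  have "integrable (measure_pmf (pair_pmf p1 (pair_pmf p2 p3))) (\<lambda>x. f1 (fst x) * (f2 (fst (snd x)) * f3 (snd (snd x))))"
    using in2(1) assms(2,3) by simp
  moreover have "(\<integral>x. f1 (fst x) * (f2 (fst (snd x)) * f3 (snd (snd x))) \<partial>measure_pmf (pair_pmf p1 (pair_pmf p2 p3)))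
     = (\<integral>a. f1 a \<partial>measure_pmf p1) * ((\<integral>b. f2 b \<partial>measure_pmf p2) * (\<integral>c. f3 c \<partial>measure_pmf p3))"
    using in2(2) in1(2) assms(2,3) by simp
  ultimately show ?thesis by (simp add: has_bochner_integral_iff)
qed

lemma int_one_pmf: "integrable (measure_pmf p) (\<lambda>_. 1::real)" "(\<integral>x. 1 \<partial>measure_pmf p) = (1::real)"
  by simp_all

lemma Q_moments:
  assumes r1: "0 \<le> r1" and r3: "0 \<le> r3"
  defines "Q \<equiv> map_pmf (\<lambda>(a, b, c). (a + c, b + c)) (pair_pmf (poi r1) (pair_pmf (poi r1) (poi r3)))"
  shows "has_bochner_integral (measure_pmf Q) (\<lambda>z. real (fst z)) (r1 + r3)"
    and "has_bochner_integral (measure_pmf Q) (\<lambda>z. real (snd z)) (r1 + r3)"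
    and "has_bochner_integral (measure_pmf Q) (\<lambda>z. real (fst z) ^ 2) ((r1 + r3) ^ 2 + (r1 + r3))"
    and "has_bochner_integral (measure_pmf Q) (\<lambda>z. real (snd z) ^ 2) ((r1 + r3) ^ 2 + (r1 + r3))"
    and "has_bochner_integral (measure_pmf Q) (\<lambda>z. real (fst z) * real (snd z)) ((r1 + r3) ^ 2 + r3)"
proof -
  define T where "T = pair_pmf (poi r1) (pair_pmf (poi r1) (poi r3))"
  define g :: "nat \<times> nat \<times> nat \<Rightarrow> nat \<times> nat" where "g = (\<lambda>(a, b, c). (a + c, b + c))"
  have tr: "has_bochner_integral (measure_pmf Q) F v" if "has_bochner_integral (measure_pmf T) (\<lambda>x. F (g x)) v" for F :: "nat \<times> nat \<Rightarrow> real" and v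
    using that unfolding Q_def T_def g_def[symmetric] by (simp add: has_bochner_integral_iff)
  note p1 = poi_int[OF r1] and p3 = poi_int[OF r3]
  note nn = of_nat_0_le_iff zero_le_power zero_le_one
  have A: "has_bochner_integral (measure_pmf T) (\<lambda>x. real (fst x) * (1 * 1)) (r1 * (1 * 1))"
    using trip[of "\<lambda>n. real n" "\<lambda>_. 1" "\<lambda>_. 1" "poi r1" "poi r1" "poi r3"] p1 unfolding T_def by simp
  have B: "has_bochner_integral (measure_pmf T) (\<lambda>x. 1 * (real (fst (snd x)) * 1)) (1 * (r1 * 1))"
    using trip[of "\<lambda>_. 1" "\<lambda>n. real n" "\<lambda>_. 1" "poi r1" "poi r1" "poi r3"] p1 unfolding T_def by simp
  have C: "has_bochner_integral (measure_pmf T) (\<lambda>x. 1 * (1 * real (snd (snd x)))) (1 * (1 * r3))"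
    using trip[of "\<lambda>_. 1" "\<lambda>_. 1" "\<lambda>n. real n" "poi r1" "poi r1" "poi r3"] p3 unfolding T_def by simp
  have A2: "has_bochner_integral (measure_pmf T) (\<lambda>x. real (fst x) ^ 2 * (1 * 1)) ((r1 ^ 2 + r1) * (1 * 1))"
    using trip[of "\<lambda>n. real n ^ 2" "\<lambda>_. 1" "\<lambda>_. 1" "poi r1" "poi r1" "poi r3"] p1 unfolding T_def by simp
  have B2: "has_bochner_integral (measure_pmf T) (\<lambda>x. 1 * (real (fst (snd x)) ^ 2 * 1)) (1 * ((r1 ^ 2 + r1) * 1))"
    using trip[of "\<lambda>_. 1" "\<lambda>n. real n ^ 2" "\<lambda>_. 1" "poi r1" "poi r1" "poi r3"] p1 unfolding T_def by simp
  have C2: "has_bochner_integral (measure_pmf T) (\<lambda>x. 1 * (1 * real (snd (snd x)) ^ 2)) (1 * (1 * (r3 ^ 2 + r3)))"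
    using trip[of "\<lambda>_. 1" "\<lambda>_. 1" "\<lambda>n. real n ^ 2" "poi r1" "poi r1" "poi r3"] p3 unfolding T_def by simp
  have AC: "has_bochner_integral (measure_pmf T) (\<lambda>x. real (fst x) * (1 * real (snd (snd x)))) (r1 * (1 * r3))"
    using trip[of "\<lambda>n. real n" "\<lambda>_. 1" "\<lambda>n. real n" "poi r1" "poi r1" "poi r3"] p1 p3 unfolding T_def by simp
  have BC: "has_bochner_integral (measure_pmf T) (\<lambda>x. 1 * (real (fst (snd x)) * real (snd (snd x)))) (1 * (r1 * r3))"
    using trip[of "\<lambda>_. 1" "\<lambda>n. real n" "\<lambda>n. real n" "poi r1" "poi r1" "poi r3"] p1 p3 unfolding T_def by simp
  have AB: "has_bochner_integral (measure_pmf T) (\<lambda>x. real (fst x) * (real (fst (snd x)) * 1)) (r1 * (r1 * 1))"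
    using trip[of "\<lambda>n. real n" "\<lambda>n. real n" "\<lambda>_. 1" "poi r1" "poi r1" "poi r3"] p1 unfolding T_def by simp
  show "has_bochner_integral (measure_pmf Q) (\<lambda>z. real (fst z)) (r1 + r3)"
    by (rule tr) (use has_bochner_integral_add[OF A C] in \<open>simp add: g_def split_beta\<close>)
  show "has_bochner_integral (measure_pmf Q) (\<lambda>z. real (snd z)) (r1 + r3)"
    by (rule tr) (use has_bochner_integral_add[OF B C] in \<open>simp add: g_def split_beta\<close>)
  show "has_bochner_integral (measure_pmf Q) (\<lambda>z. real (fst z) ^ 2) ((r1 + r3) ^ 2 + (r1 + r3))"
  proof (rule tr)
    have "has_bochner_integral (measure_pmf T) (\<lambda>x. real (fst x) ^ 2 * (1 * 1) + real (fst x) * (1 * real (snd (snd x))) + real (fst x) * (1 * real (snd (snd x))) + 1 * (1 * real (snd (snd x)) ^ 2))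
        ((r1 ^ 2 + r1) * (1 * 1) + r1 * (1 * r3) + r1 * (1 * r3) + 1 * (1 * (r3 ^ 2 + r3)))"
      by (intro has_bochner_integral_add A2 AC C2)
    then show "has_bochner_integral (measure_pmf T) (\<lambda>x. real (fst (g x)) ^ 2) ((r1 + r3) ^ 2 + (r1 + r3))"
      by (simp add: g_def split_beta power2_eq_square algebra_simps)
  qed
  show "has_bochner_integral (measure_pmf Q) (\<lambda>z. real (snd z) ^ 2) ((r1 + r3) ^ 2 + (r1 + r3))"
  proof (rule tr)
    have "has_bochner_integral (measure_pmf T) (\<lambda>x. 1 * (real (fst (snd x)) ^ 2 * 1) + 1 * (real (fst (snd x)) * real (snd (snd x))) + 1 * (real (fst (snd x)) * real (snd (snd x))) + 1 * (1 * real (snd (snd x)) ^ 2))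
        (1 * ((r1 ^ 2 + r1) * 1) + 1 * (r1 * r3) + 1 * (r1 * r3) + 1 * (1 * (r3 ^ 2 + r3)))"
      by (intro has_bochner_integral_add B2 BC C2)
    then show "has_bochner_integral (measure_pmf T) (\<lambda>x. real (snd (g x)) ^ 2) ((r1 + r3) ^ 2 + (r1 + r3))"
      by (simp add: g_def split_beta power2_eq_square algebra_simps)
  qed
  show "has_bochner_integral (measure_pmf Q) (\<lambda>z. real (fst z) * real (snd z)) ((r1 + r3) ^ 2 + r3)"
  proof (rule tr)
    have "has_bochner_integral (measure_pmf T) (\<lambda>x. real (fst x) * (real (fst (snd x)) * 1) + real (fst x) * (1 * real (snd (snd x))) + 1 * (real (fst (snd x)) * real (snd (snd x))) + 1 * (1 * real (snd (snd x)) ^ 2))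
        (r1 * (r1 * 1) + r1 * (1 * r3) + 1 * (r1 * r3) + 1 * (1 * (r3 ^ 2 + r3)))"
      by (intro has_bochner_integral_add AB AC BC C2)
    then show "has_bochner_integral (measure_pmf T) (\<lambda>x. real (fst (g x)) * real (snd (g x))) ((r1 + r3) ^ 2 + r3)"
      by (simp add: g_def split_beta power2_eq_square algebra_simps)
  qed
qed

lemma Q_pgf:
  assumes r1: "0 \<le> r1" and r3: "0 \<le> r3" and u: "0 \<le> u" "u \<le> 1" and v: "0 \<le> v" "v \<le> 1"
  shows "(\<integral>x. u ^ fst x * v ^ snd x \<partial>measure_pmf (map_pmf (\<lambda>(a, b, c). (a + c, b + c)) (pair_pmf (poi r1) (pair_pmf (poi r1) (poi r3)))))
    = exp (r1 * (u - 1)) * (exp (r1 * (v - 1)) * exp (r3 * (u * v - 1)))"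
proof -
  have bi: "integrable (measure_pmf (poi r)) (\<lambda>n. w ^ n)" if "0 \<le> w" "w \<le> 1" for r w :: real
    by (rule measure_pmf.integrable_const_bound[where B=1]) (use that in \<open>auto intro: power_le_one\<close>)
  have uv: "0 \<le> u * v" "u * v \<le> 1" using u v by (auto intro: mult_le_one)
  have h: "has_bochner_integral (measure_pmf (pair_pmf (poi r1) (pair_pmf (poi r1) (poi r3))))
     (\<lambda>x. u ^ fst x * (v ^ fst (snd x) * (u * v) ^ snd (snd x)))
     ((\<integral>n. u ^ n \<partial>measure_pmf (poi r1)) * ((\<integral>n. v ^ n \<partial>measure_pmf (poi r1)) * (\<integral>n. (u * v) ^ n \<partial>measure_pmf (poi r3))))"
    by (rule trip) (use u v uv bi in auto)
  have "(\<integral>x. u ^ fst x * v ^ snd x \<partial>measure_pmf (map_pmf (\<lambda>(a, b, c). (a + c, b + c)) (pair_pmf (poi r1) (pair_pmf (poi r1) (poi r3)))))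
     = (\<integral>x. u ^ fst x * (v ^ fst (snd x) * (u * v) ^ snd (snd x)) \<partial>measure_pmf (pair_pmf (poi r1) (pair_pmf (poi r1) (poi r3))))"
    by (simp add: split_beta power_add power_mult_distrib algebra_simps)
  also have "\<dots> = (\<integral>n. u ^ n \<partial>measure_pmf (poi r1)) * ((\<integral>n. v ^ n \<partial>measure_pmf (poi r1)) * (\<integral>n. (u * v) ^ n \<partial>measure_pmf (poi r3)))"
    using h by (simp add: has_bochner_integral_iff)
  also have "\<dots> = exp (r1 * (u - 1)) * (exp (r1 * (v - 1)) * exp (r3 * (u * v - 1)))"
    using u v uv by (simp add: poi_pgf r1 r3)
  finally show ?thesis .
qed

lemma meas_nat_add:
  fixes f g :: "'a \<Rightarrow> nat"
  assumes f: "f \<in> measurable M (count_space UNIV)" and g: "g \<in> measurable M (count_space UNIV)"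
  shows "(\<lambda>\<omega>. f \<omega> + g \<omega>) \<in> measurable M (count_space UNIV)"
proof -
  have "(\<lambda>\<omega>. (\<lambda>n \<omega>. n + g \<omega>) (f \<omega>) \<omega>) \<in> measurable M (count_space UNIV)"
  proof (rule measurable_compose_countable[OF _ f])
    fix n :: nat show "(\<lambda>\<omega>. n + g \<omega>) \<in> measurable M (count_space UNIV)"
      by (rule measurable_compose[OF g]) simp
  qed
  then show ?thesis by simp
qed

lemma meas_nat_sum:
  fixes f :: "'i \<Rightarrow> 'a \<Rightarrow> nat"
  assumes "finite I" "\<And>i. i \<in> I \<Longrightarrow> f i \<in> measurable M (count_space UNIV)"
  shows "(\<lambda>\<omega>. \<Sum>i\<in>I. f i \<omega>) \<in> measurable M (count_space UNIV)"
  using assms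
proof (induction I rule: finite_induct)
  case empty then show ?case by simp
next
  case (insert x F)
  then show ?case by (simp add: meas_nat_add)
qed

lemma meas_X:
  assumes "prob_space M" and ind: "prob_space.indep_vars M (\<lambda>_. count_space UNIV) (inma_family eps Z) UNIV"
  shows "inma_field q1 q2 eps Z s t \<in> measurable M (count_space UNIV)"
proof -
  note me = meas_fam[OF assms]
  have inner: "(\<lambda>\<omega>. \<Sum>r\<in>{1..eps (a, b) \<omega>}. Zcomp Z a b r i j \<omega>) \<in> measurable M (count_space UNIV)" for a b i j
  proof -
    have "(\<lambda>\<omega>. (\<lambda>n \<omega>. \<Sum>r\<in>{1..n}. Zcomp Z a b r i j \<omega>) (eps (a, b) \<omega>) \<omega>) \<in> measurable M (count_space UNIV)"
    proof (rule measurable_compose_countable[OF _ me(1)])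
      fix n :: nat
      show "(\<lambda>\<omega>. \<Sum>r\<in>{1..n}. Zcomp Z a b r i j \<omega>) \<in> measurable M (count_space UNIV)"
      proof (rule meas_nat_sum)
        fix r
        show "Zcomp Z a b r i j \<in> measurable M (count_space UNIV)"
          unfolding Zcomp_def[abs_def] by (rule measurable_compose[OF me(2)]) simp
      qed simp
    qed
    then show ?thesis by simp
  qed
  show ?thesis
    unfolding inma_field_def[abs_def]
    by (intro meas_nat_sum inner finite_atLeastAtMost)
qed

lemma transfer_hbi:
  fixes F :: "nat \<times> nat \<Rightarrow> real"
  assumes G: "G \<in> measurable M (count_space UNIV)"
    and d: "distr M (count_space UNIV) G = measure_pmf Q"
    and h: "has_bochner_integral (measure_pmf Q) F v"
  shows "has_bochner_integral M (\<lambda>\<omega>. F (G \<omega>)) v"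
proof -
  have "has_bochner_integral (distr M (count_space UNIV) G) F v" using h d by simp
  then show ?thesis
    using G by (simp add: has_bochner_integral_iff integrable_distr_eq integral_distr)
qed

lemma corr_from_moments:
  fixes U V :: "'a \<Rightarrow> real"
  assumes "prob_space M"
    and hU: "has_bochner_integral M U m" and hV: "has_bochner_integral M V m"
    and hU2: "has_bochner_integral M (\<lambda>\<omega>. U \<omega> ^ 2) (m ^ 2 + m)"
    and hV2: "has_bochner_integral M (\<lambda>\<omega>. V \<omega> ^ 2) (m ^ 2 + m)"
    and hUV: "has_bochner_integral M (\<lambda>\<omega>. U \<omega> * V \<omega>) (m ^ 2 + c)"
    and m: "m > 0"
  shows "corr M U V = c / m"
proof -
  interpret prob_space M by fact
  have hc: "has_bochner_integral M (\<lambda>_. k) k" for k :: real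
    by (simp add: has_bochner_integral_iff prob_space)
  have eU: "(\<integral>x. U x \<partial>M) = m" and eV: "(\<integral>x. V x \<partial>M) = m"
    using hU hV by (simp_all add: has_bochner_integral_integral_eq)
  have "has_bochner_integral M (\<lambda>\<omega>. U \<omega> * V \<omega> - m * U \<omega> - m * V \<omega> + m ^ 2) ((m ^ 2 + c) - m * m - m * m + m ^ 2)"
    by (intro has_bochner_integral_add has_bochner_integral_diff has_bochner_integral_mult_right hUV hU hV hc)
  then have c1: "(\<integral>\<omega>. (U \<omega> - m) * (V \<omega> - m) \<partial>M) = c"
    by (simp add: has_bochner_integral_iff algebra_simps power2_eq_square)
  have "has_bochner_integral M (\<lambda>\<omega>. U \<omega> ^ 2 - m * U \<omega> - m * U \<omega> + m ^ 2) ((m ^ 2 + m) - m * m - m * m + m ^ 2)"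
    by (intro has_bochner_integral_add has_bochner_integral_diff has_bochner_integral_mult_right hU2 hU hc)
  then have c2: "(\<integral>\<omega>. (U \<omega> - m) ^ 2 \<partial>M) = m"
    by (simp add: has_bochner_integral_iff algebra_simps power2_eq_square)
  have "has_bochner_integral M (\<lambda>\<omega>. V \<omega> ^ 2 - m * V \<omega> - m * V \<omega> + m ^ 2) ((m ^ 2 + m) - m * m - m * m + m ^ 2)"
    by (intro has_bochner_integral_add has_bochner_integral_diff has_bochner_integral_mult_right hV2 hV hc)
  then have c3: "(\<integral>\<omega>. (V \<omega> - m) ^ 2 \<partial>M) = m"
    by (simp add: has_bochner_integral_iff algebra_simps power2_eq_square)
  show ?thesis
    unfolding corr_def eU eV c1 c2 c3 using m by simp
qed

lemma meas_pair_nat: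
  fixes X Y :: "'a \<Rightarrow> nat"
  assumes X: "X \<in> measurable M (count_space UNIV)" and Y: "Y \<in> measurable M (count_space UNIV)"
  shows "(\<lambda>\<omega>. (X \<omega>, Y \<omega>)) \<in> measurable M (count_space UNIV)"
proof (subst measurable_count_space_eq2_countable, intro conjI ballI)
  fix p :: "nat \<times> nat"
  have "(\<lambda>\<omega>. (X \<omega>, Y \<omega>)) -` {p} \<inter> space M = {\<omega> \<in> space M. X \<omega> = fst p \<and> Y \<omega> = snd p}"
    by (cases p) auto
  also have "\<dots> \<in> sets M" using X Y by measurable
  finally show "(\<lambda>\<omega>. (X \<omega>, Y \<omega>)) -` {p} \<inter> space M \<in> sets M" .
qed auto

theorem corollary1:
  fixes M :: "'a measure"
    and q1 q2 :: nat
    and \<beta> :: "nat \<Rightarrow> nat \<Rightarrow> real"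
    and \<mu>\<epsilon> :: real
    and eps :: "int \<times> int \<Rightarrow> 'a \<Rightarrow> nat"
    and Z :: "int \<times> int \<times> nat \<Rightarrow> 'a \<Rightarrow> (nat \<times> nat) set"
    and PZ :: "(nat \<times> nat) set pmf"
    and k l :: nat and s t :: int
  assumes "prob_space M"
    and "q1 + q2 \<ge> 1"
    and "\<And>i j. i \<le> q1 \<Longrightarrow> j \<le> q2 \<Longrightarrow> 0 \<le> \<beta> i j \<and> \<beta> i j \<le> 1"
    and "\<exists>i\<le>q1. \<exists>j\<le>q2. \<beta> i j \<noteq> 0"
    and "\<And>i j. i \<le> q1 \<Longrightarrow> j \<le> q2 \<Longrightarrow> measure_pmf.prob PZ {A. (i, j) \<in> A} = \<beta> i j"
    and "\<mu>\<epsilon> > 0"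
    and "prob_space.indep_vars M (\<lambda>_. count_space UNIV) (inma_family eps Z) UNIV"
    and "\<And>st. distr M (count_space UNIV) (eps st) = measure_pmf (poisson_pmf \<mu>\<epsilon>)"
    and "\<And>str. distr M (count_space UNIV) (Z str) = measure_pmf PZ"
    and "k \<le> q1" and "l \<le> q2"
  shows
    "let \<beta>sum = (\<Sum>i\<in>{0..q1}. \<Sum>j\<in>{0..q2}. \<beta> i j);
         \<mu>X = \<mu>\<epsilon> * \<beta>sum;
         X = inma_field q1 q2 eps Z;
         \<rho> = (1 / \<beta>sum) * (\<Sum>i\<in>{k..q1}. \<Sum>j\<in>{l..q2}. pZ PZ (i, j) (i - k, j - l))
     in corr M (\<lambda>\<omega>. real (X s t \<omega>)) (\<lambda>\<omega>. real (X (s + int k) (t + int l) \<omega>)) = \<rho>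
      \<and> (\<forall>u1 u2 :: real. u1 \<in> {-1..1} \<longrightarrow> u2 \<in> {-1..1} \<longrightarrow>
            (\<integral>\<omega>. u1 ^ X s t \<omega> * u2 ^ X (s - int k) (t - int l) \<omega> \<partial>M)
              = exp (\<mu>X * (u1 + u2 - 2)) * exp (\<mu>X * \<rho> * (u1 - 1) * (u2 - 1)))
      \<and> distr M (count_space UNIV) (\<lambda>\<omega>. (X s t \<omega>, X (s - int k) (t - int l) \<omega>))
          = measure_pmf (map_pmf (\<lambda>(a, b, c). (a + c, b + c))
               (pair_pmf (poi (\<mu>X * (1 - \<rho>))) (pair_pmf (poi (\<mu>X * (1 - \<rho>))) (poi (\<mu>X * \<rho>)))))"
proof -
  interpret prob_space M by fact
  note ps = \<open>prob_space M\<close>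
  note ind = assms(7) and de = assms(8) and dZ = assms(9) and \<mu> = assms(6)
  note bprop = assms(3) and bdef = assms(5) and kl = assms(10,11)
  define bs where "bs = (\<Sum>i\<in>{0..q1}. \<Sum>j\<in>{0..q2}. \<beta> i j)"
  define S where "S = (\<Sum>i\<in>{k..q1}. \<Sum>j\<in>{l..q2}. pZ PZ (i, j) (i - k, j - l))"
  define Xf where "Xf = inma_field q1 q2 eps Z"
  define mX where "mX = \<mu>\<epsilon> * bs"
  define rho where "rho = 1 / bs * S"
  have bs_pos: "bs > 0"
  proof -
    obtain i0 j0 where ij0: "i0 \<le> q1" "j0 \<le> q2" "\<beta> i0 j0 \<noteq> 0" using assms(4) by blast
    have "\<beta> i0 j0 \<le> (\<Sum>j\<in>{0..q2}. \<beta> i0 j)"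
      by (rule member_le_sum) (use ij0 bprop in auto)
    also have "\<dots> \<le> bs" unfolding bs_def
      by (rule member_le_sum) (use ij0 bprop in \<open>auto intro!: sum_nonneg\<close>)
    finally show ?thesis using ij0 bprop[of i0 j0] by linarith
  qed
  have S0: "0 \<le> S" unfolding S_def pZ_def by (intro sum_nonneg) auto
  have SB: "S \<le> bs"
  proof -
    have "S \<le> (\<Sum>i\<in>{k..q1}. \<Sum>j\<in>{l..q2}. \<beta> i j)"
      unfolding S_def
    proof (intro sum_mono)
      fix i j assume ij: "i \<in> {k..q1}" "j \<in> {l..q2}"
      have "pZ PZ (i, j) (i - k, j - l) \<le> measure_pmf.prob PZ {A. (i, j) \<in> A}"
        unfolding pZ_def by (rule measure_pmf.finite_measure_mono) auto
      also have "\<dots> = \<beta> i j" using bdef ij by auto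
      finally show "pZ PZ (i, j) (i - k, j - l) \<le> \<beta> i j" .
    qed
    also have "\<dots> \<le> (\<Sum>i\<in>{0..q1}. \<Sum>j\<in>{l..q2}. \<beta> i j)"
      by (rule sum_mono2) (use bprop in \<open>auto intro!: sum_nonneg\<close>)
    also have "\<dots> \<le> bs" unfolding bs_def
      by (intro sum_mono sum_mono2) (use bprop in auto)
    finally show ?thesis .
  qed
  have rho0: "0 \<le> rho" and rho1: "rho \<le> 1"
    using bs_pos S0 SB by (auto simp: rho_def field_simps)
  have mX_pos: "mX > 0" using bs_pos \<mu> by (simp add: mX_def)
  have r1: "0 \<le> mX * (1 - rho)" using mX_pos rho1 by simp
  have r3: "0 \<le> mX * rho" using mX_pos rho0 by simp
  have e2: "mX * rho = \<mu>\<epsilon> * S" using bs_pos by (simp add: mX_def rho_def)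
  have e1: "mX * (1 - rho) = \<mu>\<epsilon> * bs - \<mu>\<epsilon> * S"
  proof -
    have "mX * (1 - rho) = mX - mX * rho" by (simp add: algebra_simps)
    then show ?thesis unfolding e2 by (simp add: mX_def)
  qed
  have me: "mX * (1 - rho) + mX * rho = mX" by (simp add: algebra_simps)
  have mXt: "Xf a b \<in> measurable M (count_space UNIV)" for a b
    unfolding Xf_def by (rule meas_X[OF ps ind])
  have pgfM: "(\<integral>\<omega>. u1 ^ Xf a b \<omega> * u2 ^ Xf (a - int k) (b - int l) \<omega> \<partial>M)
      = exp (\<mu>\<epsilon> * ((u1 - 1) * bs + (u2 - 1) * bs + (u1 - 1) * (u2 - 1) * S))"
    if "\<bar>u1\<bar> \<le> 1" "\<bar>u2\<bar> \<le> 1" for a b and u1 u2 :: real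
    unfolding Xf_def bs_def S_def by (rule pgf_M[OF ps ind \<mu> de dZ bdef kl that])
  have distr_gen: "distr M (count_space UNIV) (\<lambda>\<omega>. (Xf a b \<omega>, Xf (a - int k) (b - int l) \<omega>))
     = measure_pmf (map_pmf (\<lambda>(a, b, c). (a + c, b + c)) (pair_pmf (poi (mX * (1 - rho))) (pair_pmf (poi (mX * (1 - rho))) (poi (mX * rho)))))" for a b
  proof (rule distr_eq_from_pgf[OF ps mXt mXt])
    fix u v :: real assume uv: "0 < u" "u < 1" "0 < v" "v < 1"
    have "(\<integral>\<omega>. u ^ Xf a b \<omega> * v ^ Xf (a - int k) (b - int l) \<omega> \<partial>M)
      = exp (\<mu>\<epsilon> * ((u - 1) * bs + (v - 1) * bs + (u - 1) * (v - 1) * S))"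
      by (rule pgfM) (use uv in auto)
    also have "\<dots> = exp (mX * (1 - rho) * (u - 1)) * (exp (mX * (1 - rho) * (v - 1)) * exp (mX * rho * (u * v - 1)))"
      unfolding mult_exp_exp e1 e2 by (rule arg_cong[where f=exp]) (simp add: algebra_simps)
    also have "\<dots> = (\<integral>x. u ^ fst x * v ^ snd x \<partial>measure_pmf (map_pmf (\<lambda>(a, b, c). (a + c, b + c)) (pair_pmf (poi (mX * (1 - rho))) (pair_pmf (poi (mX * (1 - rho))) (poi (mX * rho))))))"
      by (rule Q_pgf[OF r1 r3, symmetric]) (use uv in auto)
    finally show "(\<integral>\<omega>. u ^ Xf a b \<omega> * v ^ Xf (a - int k) (b - int l) \<omega> \<partial>M) = (\<integral>x. u ^ fst x * v ^ snd x \<partial>measure_pmf (map_pmf (\<lambda>(a, b, c). (a + c, b + c)) (pair_pmf (poi (mX * (1 - rho))) (pair_pmf (poi (mX * (1 - rho))) (poi (mX * rho))))))" .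
  qed
  have pgf: "\<forall>u1 u2 :: real. u1 \<in> {-1..1} \<longrightarrow> u2 \<in> {-1..1} \<longrightarrow>
            (\<integral>\<omega>. u1 ^ Xf s t \<omega> * u2 ^ Xf (s - int k) (t - int l) \<omega> \<partial>M)
              = exp (mX * (u1 + u2 - 2)) * exp (mX * rho * (u1 - 1) * (u2 - 1))"
  proof (intro allI impI)
    fix u1 u2 :: real assume u: "u1 \<in> {-1..1}" "u2 \<in> {-1..1}"
    have "(\<integral>\<omega>. u1 ^ Xf s t \<omega> * u2 ^ Xf (s - int k) (t - int l) \<omega> \<partial>M)
      = exp (\<mu>\<epsilon> * ((u1 - 1) * bs + (u2 - 1) * bs + (u1 - 1) * (u2 - 1) * S))"
      by (rule pgfM) (use u in auto)
    also have "\<dots> = exp (mX * (u1 + u2 - 2)) * exp (mX * rho * (u1 - 1) * (u2 - 1))"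
      unfolding mult_exp_exp e2 by (rule arg_cong[where f=exp]) (simp add: mX_def algebra_simps)
    finally show "(\<integral>\<omega>. u1 ^ Xf s t \<omega> * u2 ^ Xf (s - int k) (t - int l) \<omega> \<partial>M)
              = exp (mX * (u1 + u2 - 2)) * exp (mX * rho * (u1 - 1) * (u2 - 1))" .
  qed
  have cor: "corr M (\<lambda>\<omega>. real (Xf s t \<omega>)) (\<lambda>\<omega>. real (Xf (s + int k) (t + int l) \<omega>)) = rho"
  proof -
    define G where "G \<omega> = (Xf (s + int k) (t + int l) \<omega>, Xf s t \<omega>)" for \<omega>
    have dG: "distr M (count_space UNIV) G = measure_pmf (map_pmf (\<lambda>(a, b, c). (a + c, b + c)) (pair_pmf (poi (mX * (1 - rho))) (pair_pmf (poi (mX * (1 - rho))) (poi (mX * rho)))))"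
      using distr_gen[of "s + int k" "t + int l"] by (simp add: G_def[abs_def])
    have mG: "G \<in> measurable M (count_space UNIV)"
      unfolding G_def[abs_def] by (rule meas_pair_nat[OF mXt mXt])
    note QM = Q_moments[OF r1 r3]
    note tr = transfer_hbi[OF mG dG]
    have hV: "has_bochner_integral M (\<lambda>\<omega>. real (Xf (s + int k) (t + int l) \<omega>)) mX"
      using tr[OF QM(1)] unfolding me by (simp add: G_def)
    have hU: "has_bochner_integral M (\<lambda>\<omega>. real (Xf s t \<omega>)) mX"
      using tr[OF QM(2)] unfolding me by (simp add: G_def)
    have hV2: "has_bochner_integral M (\<lambda>\<omega>. real (Xf (s + int k) (t + int l) \<omega>) ^ 2) (mX ^ 2 + mX)"
      using tr[OF QM(3)] unfolding me by (simp add: G_def)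
    have hU2: "has_bochner_integral M (\<lambda>\<omega>. real (Xf s t \<omega>) ^ 2) (mX ^ 2 + mX)"
      using tr[OF QM(4)] unfolding me by (simp add: G_def)
    have hVU: "has_bochner_integral M (\<lambda>\<omega>. real (Xf (s + int k) (t + int l) \<omega>) * real (Xf s t \<omega>)) (mX ^ 2 + mX * rho)"
      using tr[OF QM(5)] unfolding me by (simp add: G_def)
    have eqf: "(\<lambda>\<omega>. real (Xf (s + int k) (t + int l) \<omega>) * real (Xf s t \<omega>)) = (\<lambda>\<omega>. real (Xf s t \<omega>) * real (Xf (s + int k) (t + int l) \<omega>))"
      by (simp add: fun_eq_iff mult.commute)
    have hUV: "has_bochner_integral M (\<lambda>\<omega>. real (Xf s t \<omega>) * real (Xf (s + int k) (t + int l) \<omega>)) (mX ^ 2 + mX * rho)"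
      using hVU unfolding eqf .
    have "corr M (\<lambda>\<omega>. real (Xf s t \<omega>)) (\<lambda>\<omega>. real (Xf (s + int k) (t + int l) \<omega>)) = mX * rho / mX"
      by (rule corr_from_moments[OF ps hU hV hU2 hV2 hUV mX_pos])
    then show ?thesis using mX_pos by simp
  qed
  have final: "corr M (\<lambda>\<omega>. real (Xf s t \<omega>)) (\<lambda>\<omega>. real (Xf (s + int k) (t + int l) \<omega>)) = rho
      \<and> (\<forall>u1 u2 :: real. u1 \<in> {-1..1} \<longrightarrow> u2 \<in> {-1..1} \<longrightarrow>
            (\<integral>\<omega>. u1 ^ Xf s t \<omega> * u2 ^ Xf (s - int k) (t - int l) \<omega> \<partial>M)
              = exp (mX * (u1 + u2 - 2)) * exp (mX * rho * (u1 - 1) * (u2 - 1)))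
      \<and> distr M (count_space UNIV) (\<lambda>\<omega>. (Xf s t \<omega>, Xf (s - int k) (t - int l) \<omega>))
          = measure_pmf (map_pmf (\<lambda>(a, b, c). (a + c, b + c))
               (pair_pmf (poi (mX * (1 - rho))) (pair_pmf (poi (mX * (1 - rho))) (poi (mX * rho)))))"
    using cor pgf distr_gen[of s t] by blast
  show ?thesis
    unfolding Let_def using final unfolding Xf_def mX_def rho_def bs_def S_def .
qed


end
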